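(* Let $m\mid n$ be positive integers, $q$ a primitive $m$-th root of unity, $\alpha\in\mathbb{C}$, and fix a primitive $n$-th root of unity $\zeta$ with $\zeta^{n/m}=q$. Let $T=T(n,m,\alpha)$. (i) Suppose $A$ is a central simple algebra which is a $T$-module algebra. Let $A=\bigoplus_{i\in\mathbb{Z}/n\mathbb{Z}}A_i$ be the decomposition into eigenspaces for $g$, where $g$ acts on $A_i$ by $\zeta^i$, and write $|a|=i$ for $a\in A_i$. Then there exists $c\in A_{n/m}$ such that $x\cdot a=ca-\zeta^{|a|}ac$ for every homogeneous $a\in A$, and this $c$ satisfies $c^ma-\zeta^{m|a|}ac^m=\alpha(1-\zeta^{m|a|})a$ for every homogeneous $a\in A$. (ii) Conversely, let $A=\bigoplus_{i\in\mathbb{Z}/n\mathbb{Z}}A_i$ be a $\mathbb{Z}/n\mathbb{Z}$-graded central simple division algebra and let $c\in A_{n/m}$ satisfy $c^ma-\zeta^{m|a|}ac^m=\alpha(1-\zeta^{m|a|})a$ for each homogeneous $a\in A$. Then there is a unique action of $T$ on $A$ with $g\cdot a=\zeta^{|a|}a$ and $x\cdot a=ca-\zeta^{|a|}ac$ for homogeneous $a$, and this action makes $A$ a $T$-module algebra.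
   Context: For positive integers $m\mid n$, a primitive $m$-th root of unity $q$, and $\alpha\in\mathbb{C}$, the generalized Taft algebra is the Hopf algebra $T(n,m,\alpha)=\mathbb{C}\langle x,g\rangle/(x^m-\alpha(1-g^m),\ g^n-1,\ gxg^{-1}-qx)$ with $g$ grouplike and $\Delta(x)=x\otimes 1+g\otimes x$. A central simple algebra is a simple algebra finite-dimensional over its center. A $T$-module algebra is an algebra $A$ with a $T$-module structure satisfying $h\cdot(ab)=(h_1\cdot a)(h_2\cdot b)$, $h\cdot 1=\epsilon(h)1$; in particular $g$ acts by an algebra automorphism, so the eigenspace decomposition is an algebra grading. *)

theory Defs
  imports Complex_Main
begin

text \<open>A complex algebra: a unital ring together with a unital ring homomorphism
  from the complex numbers into its centre; scalar multiplication by z is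
  left multiplication by iota z.\<close>
definition complex_algebra :: "(complex \<Rightarrow> 'a::ring_1) \<Rightarrow> bool" where
  "complex_algebra \<iota> \<longleftrightarrow>
     \<iota> 1 = 1 \<and> (\<forall>z w. \<iota> (z + w) = \<iota> z + \<iota> w) \<and> (\<forall>z w. \<iota> (z * w) = \<iota> z * \<iota> w)
     \<and> (\<forall>z a. \<iota> z * a = a * \<iota> z)"

definition centre :: "'a::ring_1 set" where
  "centre = {z. \<forall>a. z * a = a * z}"

definition two_sided_ideal :: "'a::ring_1 set \<Rightarrow> bool" where
  "two_sided_ideal I \<longleftrightarrow> 0 \<in> I \<and> (\<forall>a\<in>I. \<forall>b\<in>I. a + b \<in> I) \<and> (\<forall>a\<in>I. - a \<in> I)
     \<and> (\<forall>a\<in>I. \<forall>r. r * a \<in> I \<and> a * r \<in> I)"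

definition simple_ring :: "'a::ring_1 itself \<Rightarrow> bool" where
  "simple_ring _ \<longleftrightarrow> (1::'a) \<noteq> 0 \<and>
     (\<forall>I::'a set. two_sided_ideal I \<longrightarrow> I = {0} \<or> I = UNIV)"

definition central_simple :: "'a::ring_1 itself \<Rightarrow> bool" where
  "central_simple T \<longleftrightarrow> simple_ring T \<and>
     (\<exists>B::'a set. finite B \<and>
        (\<forall>a. \<exists>f. (\<forall>b\<in>B. f b \<in> centre) \<and> a = (\<Sum>b\<in>B. f b * b)))"

definition division_ring_pred :: "'a::ring_1 itself \<Rightarrow> bool" where
  "division_ring_pred _ \<longleftrightarrow> (1::'a) \<noteq> 0 \<and> (\<forall>a::'a. a \<noteq> 0 \<longrightarrow> (\<exists>b. a * b = 1 \<and> b * a = 1))"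

definition primitive_root_of_unity :: "nat \<Rightarrow> complex \<Rightarrow> bool" where
  "primitive_root_of_unity k z \<longleftrightarrow> z ^ k = 1 \<and> (\<forall>j. 0 < j \<and> j < k \<longrightarrow> z ^ j \<noteq> 1)"

definition c_linear :: "(complex \<Rightarrow> 'a::ring_1) \<Rightarrow> ('a \<Rightarrow> 'a) \<Rightarrow> bool" where
  "c_linear \<iota> f \<longleftrightarrow> (\<forall>a b. f (a + b) = f a + f b) \<and> (\<forall>z a. f (\<iota> z * a) = \<iota> z * f a)"

text \<open>A module over the generalized Taft algebra T(n,m,alpha) (with parameter q),
  given by the actions G of g and X of x: C-linear maps satisfying the defining
  relations x^m = alpha(1 - g^m), g^n = 1, g x g^{-1} = q x.\<close>
definition taft_module ::
  "(complex \<Rightarrow> 'a::ring_1) \<Rightarrow> nat \<Rightarrow> nat \<Rightarrow> complex \<Rightarrow> complex \<Rightarrow> ('a \<Rightarrow> 'a) \<Rightarrow> ('a \<Rightarrow> 'a) \<Rightarrow> bool" where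
  "taft_module \<iota> n m \<alpha> q G X \<longleftrightarrow> c_linear \<iota> G \<and> c_linear \<iota> X
     \<and> (\<forall>a. (X ^^ m) a = \<iota> \<alpha> * (a - (G ^^ m) a))
     \<and> (\<forall>a. (G ^^ n) a = a)
     \<and> (\<forall>a. G (X a) = \<iota> q * X (G a))"

text \<open>Module algebra: h.(ab) = (h1.a)(h2.b), h.1 = eps(h) 1, checked on the
  generators g (grouplike) and x (Delta x = x (x) 1 + g (x) x, eps x = 0).\<close>
definition taft_module_algebra ::
  "(complex \<Rightarrow> 'a::ring_1) \<Rightarrow> nat \<Rightarrow> nat \<Rightarrow> complex \<Rightarrow> complex \<Rightarrow> ('a \<Rightarrow> 'a) \<Rightarrow> ('a \<Rightarrow> 'a) \<Rightarrow> bool" where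
  "taft_module_algebra \<iota> n m \<alpha> q G X \<longleftrightarrow> taft_module \<iota> n m \<alpha> q G X
     \<and> (\<forall>a b. G (a * b) = G a * G b) \<and> G 1 = 1
     \<and> (\<forall>a b. X (a * b) = X a * b + G a * X b) \<and> X 1 = 0"

definition zn_graded :: "(complex \<Rightarrow> 'a::ring_1) \<Rightarrow> nat \<Rightarrow> (nat \<Rightarrow> 'a set) \<Rightarrow> bool" where
  "zn_graded \<iota> n Agr \<longleftrightarrow>
     (\<forall>i<n. 0 \<in> Agr i \<and> (\<forall>a\<in>Agr i. \<forall>b\<in>Agr i. a + b \<in> Agr i) \<and> (\<forall>z. \<forall>a\<in>Agr i. \<iota> z * a \<in> Agr i))
     \<and> (\<forall>i<n. \<forall>j<n. \<forall>a\<in>Agr i. \<forall>b\<in>Agr j. a * b \<in> Agr ((i + j) mod n))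
     \<and> (\<forall>a. \<exists>!f. (\<forall>i. (i < n \<longrightarrow> f i \<in> Agr i) \<and> (n \<le> i \<longrightarrow> f i = 0)) \<and> a = (\<Sum>i<n. f i))"

end

theory Submission
  imports Defs "HOL-Algebra.Embedded_Algebras" "HOL-Library.Function_Algebras"
begin


definition RR :: "'b::ring_1 ring" where
  "RR = \<lparr>carrier = UNIV, mult = (*), one = 1, zero = 0, add = (+)\<rparr>"

lemma RR_simps [simp]: "carrier (RR::'b::ring_1 ring) = UNIV" "mult RR = (*)" "one RR = 1"
  "zero RR = 0" "add RR = (+)"
  by (simp_all add: RR_def)

lemma ring_RR: "ring (RR::'b::ring_1 ring)"
  apply (rule ringI)
  apply (rule abelian_groupI)
  apply (auto simp: algebra_simps)
  apply (metis right_minus)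
  apply (rule monoidI)
  apply (auto simp: algebra_simps)
  done

lemma a_inv_RR [simp]: "a_inv (RR::'b::ring_1 ring) x = - x"
proof -
  interpret ring "RR::'b ring" by (rule ring_RR)
  have "x \<oplus>\<^bsub>RR\<^esub> (- x) = \<zero>\<^bsub>RR\<^esub>" by simp
  then show ?thesis using minus_equality[of "-x" x] by (simp add: add.commute)
qed

definition cfield :: "'b::ring_1 set \<Rightarrow> bool" where
  "cfield K \<longleftrightarrow> (1::'b) \<noteq> 0 \<and> K \<subseteq> centre \<and> 1 \<in> K \<and> (\<forall>a\<in>K. \<forall>b\<in>K. a + b \<in> K \<and> a * b \<in> K)
     \<and> (\<forall>a\<in>K. - a \<in> K) \<and> (\<forall>a\<in>K. a \<noteq> 0 \<longrightarrow> (\<exists>b\<in>K. a * b = 1))"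

lemma cfield_subfield:
  assumes "cfield (K::'b::ring_1 set)"
  shows "subfield K RR"
proof -
  interpret ring "RR::'b ring" by (rule ring_RR)
  have cen: "\<And>a b. a \<in> K \<Longrightarrow> a * b = b * a" using assms unfolding cfield_def centre_def by blast
  have sr: "subring K RR"
    by (rule subringI) (use assms in \<open>auto simp: cfield_def\<close>)
  have scr: "subcring K RR"
    by (rule subcringI[OF sr]) (simp add: cen)
  show ?thesis
  proof (rule subfieldI[OF scr])
    show "Units (RR\<lparr>carrier := K\<rparr>) = K - {\<zero>\<^bsub>RR\<^esub>}"
    proof
      show "Units (RR\<lparr>carrier := K\<rparr>) \<subseteq> K - {\<zero>\<^bsub>RR\<^esub>}"
        using assms by (auto simp: Units_def cfield_def)
      show "K - {\<zero>\<^bsub>RR\<^esub>} \<subseteq> Units (RR\<lparr>carrier := K\<rparr>)"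
        using assms by (auto simp: Units_def cfield_def) (metis cen)
    qed
  qed
qed

lemma combine_RR:
  "ring.combine (RR::'b::ring_1 ring) ks us = (\<Sum>l<min (length ks) (length us). ks!l * us!l)"
proof -
  interpret ring "RR::'b ring" by (rule ring_RR)
  show ?thesis
  proof (induction us arbitrary: ks)
    case Nil then show ?case by (cases ks) auto
  next
    case (Cons u us)
    show ?case
    proof (cases ks)
      case Nil then show ?thesis by simp
    next
      case (Cons k ks')
      have "(\<Sum>l<min (length ks) (length (u#us)). ks!l * (u#us)!l)
          = (\<Sum>l<Suc (min (length ks') (length us)). ks!l * (u#us)!l)" using Cons by simp
      also have "\<dots> = k * u + (\<Sum>l<min (length ks') (length us). ks'!l * us!l)"
        by (subst sum.lessThan_Suc_shift) (simp add: Cons)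
      finally show ?thesis using Cons Cons.IH by simp
    qed
  qed
qed

lemma indep_RR_D:
  assumes K: "subfield K (RR::'b::ring_1 ring)" and ind: "ring.independent RR K us"
    and kK: "\<forall>l<length us. k l \<in> K" and s: "(\<Sum>l<length us. k l * us!l) = 0"
  shows "\<forall>l<length us. k l = 0"
proof -
  interpret ring "RR::'b ring" by (rule ring_RR)
  let ?Ks = "map k [0..<length us]"
  have "set ?Ks \<subseteq> K" using kK by auto
  moreover have "combine ?Ks us = \<zero>\<^bsub>RR\<^esub>" using s by (simp add: combine_RR)
  ultimately have "set (take (length us) ?Ks) \<subseteq> {\<zero>\<^bsub>RR\<^esub>}"
    using independent_imp_trivial_combine[OF K ind] by blast
  then show ?thesis by fastforce
qed

lemma indep_RR_I:
  assumes K: "subfield K (RR::'b::ring_1 ring)"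
    and H: "\<And>k. \<forall>l<length us. k l \<in> K \<Longrightarrow> (\<Sum>l<length us. k l * us!l) = 0 \<Longrightarrow> \<forall>l<length us. k l = 0"
  shows "ring.independent RR K us"
proof -
  interpret ring "RR::'b ring" by (rule ring_RR)
  show ?thesis
  proof (rule trivial_combine_imp_independent[OF K])
    show "set us \<subseteq> carrier RR" by simp
    fix Ks assume Ks: "set Ks \<subseteq> K" "combine Ks us = \<zero>\<^bsub>RR\<^esub>"
    define k where "k l = (if l < length Ks then Ks!l else 0)" for l
    have kK: "\<forall>l<length us. k l \<in> K"
      using Ks(1) subringE(2)[OF subfieldE(1)[OF K]] by (auto simp: k_def)
    have "(\<Sum>l<length us. k l * us!l) = (\<Sum>l<min (length Ks) (length us). Ks!l * us!l)"
      by (rule sum.mono_neutral_cong_right) (auto simp: k_def)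
    also have "\<dots> = 0" using Ks(2) by (simp add: combine_RR)
    finally have "\<forall>l<length us. k l = 0" using H kK by blast
    then show "set (take (length us) Ks) \<subseteq> {\<zero>\<^bsub>RR\<^esub>}"
      by (auto simp: set_conv_nth k_def)
  qed
qed

lemma Span_RR:
  assumes K: "subfield K (RR::'b::ring_1 ring)"
  shows "ring.Span RR K us = {(\<Sum>l<length us. k l * us!l) | k. \<forall>l<length us. k l \<in> K}"
proof -
  interpret ring "RR::'b ring" by (rule ring_RR)
  have "ring.Span RR K us = {combine Ks us | Ks. length Ks = length us \<and> set Ks \<subseteq> K}"
    by (rule Span_eq_combine_set_length_version[OF K]) simp
  also have "\<dots> = {(\<Sum>l<length us. k l * us!l) | k. \<forall>l<length us. k l \<in> K}"
  proof safe
    fix Ks :: "'b list" assume "length Ks = length us" "set Ks \<subseteq> K"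
    then show "\<exists>k. combine Ks us = (\<Sum>l<length us. k l * us!l) \<and> (\<forall>l<length us. k l \<in> K)"
      by (intro exI[of _ "\<lambda>l. Ks!l"]) (auto simp: combine_RR)
  next
    fix k assume kK: "\<forall>l<length us. k l \<in> K"
    show "\<exists>Ks. (\<Sum>l<length us. k l * us!l) = combine Ks us \<and> length Ks = length us \<and> set Ks \<subseteq> K"
      by (intro exI[of _ "map k [0..<length us]"]) (use kK in \<open>auto simp: combine_RR\<close>)
  qed
  finally show ?thesis .
qed

lemma Span_RR_props:
  assumes K: "subfield K (RR::'b::ring_1 ring)"
  shows "0 \<in> ring.Span RR K S"
    and "\<And>u v. u \<in> ring.Span RR K S \<Longrightarrow> v \<in> ring.Span RR K S \<Longrightarrow> u + v \<in> ring.Span RR K S"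
    and "\<And>k v. k \<in> K \<Longrightarrow> v \<in> ring.Span RR K S \<Longrightarrow> k * v \<in> ring.Span RR K S"
    and "set S \<subseteq> ring.Span RR K S"
proof -
  interpret ring "RR::'b ring" by (rule ring_RR)
  show "0 \<in> Span K S" using Span_subgroup_props(2)[OF K, of S] by simp
  show "\<And>u v. u \<in> Span K S \<Longrightarrow> v \<in> Span K S \<Longrightarrow> u + v \<in> Span K S"
    using Span_subgroup_props(3)[OF K, of S] by simp
  show "\<And>k v. k \<in> K \<Longrightarrow> v \<in> Span K S \<Longrightarrow> k * v \<in> Span K S"
    using Span_smult_closed[OF K, of S] by simp
  show "set S \<subseteq> Span K S" using Span_base_incl[OF K, of S] by simp
qed

lemma Span_RR_sum:
  assumes K: "subfield K (RR::'b::ring_1 ring)"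
    and "\<forall>l<(N::nat). k l \<in> K" "\<forall>l<N. v l \<in> ring.Span RR K S"
  shows "(\<Sum>l<N. k l * v l) \<in> ring.Span RR K S"
  using assms(2,3)
  by (induction N) (auto intro!: Span_RR_props[OF K])

lemma inj_surj_RR:
  fixes T :: "'b::ring_1 \<Rightarrow> 'b"
  assumes K: "subfield K (RR::'b ring)"
    and TV: "\<And>v. v \<in> ring.Span RR K S \<Longrightarrow> T v \<in> ring.Span RR K S"
    and Tadd: "\<And>u v. u \<in> ring.Span RR K S \<Longrightarrow> v \<in> ring.Span RR K S \<Longrightarrow> T (u + v) = T u + T v"
    and Tsm: "\<And>k v. k \<in> K \<Longrightarrow> v \<in> ring.Span RR K S \<Longrightarrow> T (k * v) = k * T v"
    and Tinj: "\<And>v. v \<in> ring.Span RR K S \<Longrightarrow> T v = 0 \<Longrightarrow> v = 0"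
    and t: "t \<in> ring.Span RR K S"
  shows "\<exists>v\<in>ring.Span RR K S. T v = t"
proof -
  interpret ring "RR::'b ring" by (rule ring_RR)
  let ?V = "Span K S"
  obtain Vs where Vs: "independent K Vs" "Span K Vs = ?V"
    using filter_base[OF K, of S] by auto
  have VsV: "\<forall>l<length Vs. Vs!l \<in> ?V"
    using Span_RR_props(4)[OF K, of Vs] Vs(2) by auto
  have T0: "T 0 = 0"
    using Tadd[of 0 0] Span_RR_props(1)[OF K, of S] by simp
  have Tsum: "T (\<Sum>l<N. k l * v l) = (\<Sum>l<N. k l * T (v l))"
    if "\<forall>l<N. k l \<in> K" "\<forall>l<N. v l \<in> ?V" for N :: nat and k v
    using that
  proof (induction N)
    case 0 then show ?case using T0 by simp
  next
    case (Suc N)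
    have "T (\<Sum>l<Suc N. k l * v l) = T (\<Sum>l<N. k l * v l) + T (k N * v N)"
      using Suc.prems by (simp, intro Tadd Span_RR_sum[OF K] Span_RR_props(3)[OF K]) auto
    then show ?case using Suc by (simp add: Tsm)
  qed
  let ?Ws = "map T Vs"
  have indW: "independent K ?Ws"
  proof (rule indep_RR_I[OF K])
    fix k assume kK: "\<forall>l<length ?Ws. k l \<in> K" and s: "(\<Sum>l<length ?Ws. k l * ?Ws!l) = 0"
    have "T (\<Sum>l<length Vs. k l * Vs!l) = (\<Sum>l<length Vs. k l * T (Vs!l))"
      using kK VsV by (intro Tsum) auto
    also have "\<dots> = 0" using s by simp
    finally have "(\<Sum>l<length Vs. k l * Vs!l) = 0"
      using Tinj Span_RR_sum[OF K, of "length Vs" k "\<lambda>l. Vs!l"] kK VsV by auto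
    then show "\<forall>l<length ?Ws. k l = 0"
      using indep_RR_D[OF K Vs(1)] kK by auto
  qed
  have dim: "dimension (length Vs) K ?V"
    using dimensionI[OF K Vs(1)] Vs(2) by simp
  have "set ?Ws \<subseteq> ?V" using TV VsV by (auto simp: set_conv_nth)
  then have "Span K ?Ws = ?V"
    using independent_length_eq_dimension[OF K dim indW] by simp
  then obtain k where kK: "\<forall>l<length Vs. k l \<in> K" and tk: "t = (\<Sum>l<length Vs. k l * ?Ws!l)"
    using t Span_RR[OF K, of ?Ws] by auto
  have "T (\<Sum>l<length Vs. k l * Vs!l) = t"
    using Tsum[of "length Vs" k "\<lambda>l. Vs!l"] kK VsV tk by simp
  moreover have "(\<Sum>l<length Vs. k l * Vs!l) \<in> ?V"
    using Span_RR_sum[OF K] kK VsV by auto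
  ultimately show ?thesis by blast
qed



lemma sum_fun_apply: "(\<Sum>i<(N::nat). f i) x = (\<Sum>i<N. f i x)"
  by (induction N) auto

lemma centre_iff: "z \<in> centre \<longleftrightarrow> (\<forall>a. z * a = a * z)"
  by (simp add: centre_def)

lemma centre_sum: "\<forall>i<(N::nat). f i \<in> centre \<Longrightarrow> (\<Sum>i<N. f i) \<in> centre"
  by (induction N) (auto simp: centre_iff algebra_simps)

lemma simple_ideal:
  assumes "simple_ring TYPE('a::ring_1)" "two_sided_ideal (I::'a set)"
  shows "I = {0} \<or> I = UNIV"
  using assms by (auto simp: simple_ring_def)

lemma centre_field:
  assumes s: "simple_ring TYPE('a::ring_1)"
  shows "cfield (centre::'a set)"
proof -
  have inv: "\<exists>b\<in>centre. z * b = 1" if z: "z \<in> centre" "z \<noteq> 0" for z :: 'a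
  proof -
    let ?I = "{y. \<exists>s. y = s * z}"
    have zc: "\<And>a. z * a = a * z" using z(1) by (simp add: centre_iff)
    have "two_sided_ideal ?I"
      unfolding two_sided_ideal_def
    proof (intro conjI ballI allI)
      show "0 \<in> ?I" by (auto intro: exI[of _ 0])
      fix a b assume "a \<in> ?I" "b \<in> ?I"
      then obtain s t where "a = s * z" "b = t * z" by auto
      then have "a + b = (s + t) * z" by (simp add: distrib_right)
      then show "a + b \<in> ?I" by blast
    next
      fix a assume "a \<in> ?I"
      then obtain s where "a = s * z" by auto
      then have "- a = (- s) * z" by simp
      then show "- a \<in> ?I" by blast
    next
      fix a r assume "a \<in> ?I"
      then obtain s where a: "a = s * z" by auto
      have "r * a = (r * s) * z" using a by (simp add: mult.assoc)
      then show "r * a \<in> ?I" by blast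
    next
      fix a r assume "a \<in> ?I"
      then obtain s where a: "a = s * z" by auto
      have "a * r = (s * r) * z" using a zc[of r] by (simp add: mult.assoc)
      then show "a * r \<in> ?I" by blast
    qed
    moreover have "z \<in> ?I" by (rule CollectI, rule exI[of _ 1], simp)
    ultimately have "?I = UNIV" using simple_ideal[OF s] z(2) by blast
    then have "1 \<in> ?I" by simp
    then obtain s where s1: "1 = s * z" by blast
    have zs: "z * s = 1" using s1 zc[of s] by simp
    have "s * a = a * s" for a
    proof -
      have "s * a = s * a * (z * s)" by (simp add: zs)
      also have "\<dots> = s * (a * z) * s" by (simp add: mult.assoc)
      also have "\<dots> = s * (z * a) * s" by (simp only: zc[of a])
      also have "\<dots> = (s * z) * a * s" by (simp add: mult.assoc)
      also have "\<dots> = a * s" by (simp add: s1[symmetric])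
      finally show ?thesis .
    qed
    then have "s \<in> centre" by (simp add: centre_iff)
    then show ?thesis using zs by blast
  qed
  have "(1::'a) \<noteq> 0" using s by (simp add: simple_ring_def)
  moreover have "\<forall>a\<in>centre. \<forall>b\<in>centre. a + b \<in> centre \<and> a * b \<in> (centre::'a set)"
  proof (intro ballI conjI)
    fix a b :: 'a assume a: "a \<in> centre" and b: "b \<in> centre"
    show "a + b \<in> centre" using a b by (simp add: centre_iff distrib_left distrib_right)
    show "a * b \<in> centre" unfolding centre_iff
    proof
      fix x
      have "a * b * x = a * (x * b)" using b by (simp add: centre_iff mult.assoc)
      also have "\<dots> = (a * x) * b" by (simp add: mult.assoc)
      also have "\<dots> = x * (a * b)" using a by (simp add: centre_iff mult.assoc)
      finally show "a * b * x = x * (a * b)" .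
    qed
  qed
  moreover have "\<forall>a\<in>centre. - a \<in> (centre::'a set)"
    by (simp add: centre_iff)
  moreover have "(1::'a) \<in> centre" by (simp add: centre_iff)
  ultimately show ?thesis
    unfolding cfield_def using inv by blast
qed

definition indepF :: "'a::ring_1 set \<Rightarrow> (nat \<Rightarrow> 'a) \<Rightarrow> nat \<Rightarrow> bool" where
  "indepF K e r \<longleftrightarrow> (\<forall>k. (\<forall>l<r. k l \<in> K) \<longrightarrow> (\<Sum>l<r. k l * e l) = 0 \<longrightarrow> (\<forall>l<r. k l = 0))"

lemma indepF_Suc:
  assumes "indepF K e (Suc r)" "0 \<in> K" "1 \<in> K" "\<forall>a\<in>K. - a \<in> K" "(1::'a::ring_1) \<noteq> 0"
  shows "indepF K e r"
    and "\<And>k. \<forall>l<r. k l \<in> K \<Longrightarrow> e r \<noteq> (\<Sum>l<r. k l * e l)"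
proof -
  have H: "\<And>k. (\<forall>l<Suc r. k l \<in> K) \<Longrightarrow> (\<Sum>l<Suc r. k l * e l) = 0 \<Longrightarrow> \<forall>l<Suc r. k l = 0"
    using assms(1) unfolding indepF_def by blast
  show "indepF K e r"
    unfolding indepF_def
  proof (rule allI, intro impI)
    fix k assume kK: "\<forall>l<r. k l \<in> K" and s: "(\<Sum>l<r. k l * e l) = 0"
    let ?k = "\<lambda>l. if l < r then k l else 0"
    have "(\<Sum>l<Suc r. ?k l * e l) = 0" using s by simp
    moreover have "\<forall>l<Suc r. ?k l \<in> K" using kK assms(2) by auto
    ultimately have "\<forall>l<Suc r. ?k l = 0" by (rule H[rotated])
    then show "\<forall>l<r. k l = 0" by (metis less_SucI)
  qed
  fix k assume kK: "\<forall>l<r. k l \<in> K"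
  show "e r \<noteq> (\<Sum>l<r. k l * e l)"
  proof
    assume h: "e r = (\<Sum>l<r. k l * e l)"
    let ?k = "\<lambda>l. if l < r then - k l else 1"
    have "(\<Sum>l<Suc r. ?k l * e l) = (\<Sum>l<r. ?k l * e l) + e r"
      by simp
    also have "(\<Sum>l<r. ?k l * e l) = (\<Sum>l<r. - (k l * e l))"
      by (rule sum.cong) auto
    also have "\<dots> = - e r" unfolding sum_negf h ..
    finally have "(\<Sum>l<Suc r. ?k l * e l) = 0" by simp
    moreover have "\<forall>l<Suc r. ?k l \<in> K" using kK assms(3,4) by auto
    ultimately have "\<forall>l<Suc r. ?k l = 0" by (rule H[rotated])
    then have "?k r = 0" by blast
    then show False using assms(5) by simp
  qed
qed

lemma centre_basic:
  "0 \<in> centre" "1 \<in> centre" "\<forall>a\<in>centre. - a \<in> (centre::'a::ring_1 set)"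
  by (auto simp: centre_iff)

lemma tensor_indep:
  assumes s: "simple_ring TYPE('a::ring_1)"
    and ind: "indepF (centre::'a set) e r"
    and H: "\<forall>a. (\<Sum>l<r. e l * a * v l) = 0"
  shows "\<forall>l<r. v l = 0"
  using ind H
proof (induction r arbitrary: v)
  case 0 then show ?case by simp
next
  case (Suc r)
  have one0: "(1::'a) \<noteq> 0" using s by (simp add: simple_ring_def)
  have indr: "indepF centre e r" using indepF_Suc(1)[OF Suc.prems(1) centre_basic one0] .
  have notin: "\<And>k. \<forall>l<r. k l \<in> centre \<Longrightarrow> e r \<noteq> (\<Sum>l<r. k l * e l)"
    by (rule indepF_Suc(2)[OF Suc.prems(1) centre_basic one0])
  let ?J = "{y. \<exists>w. \<forall>a. (\<Sum>l<r. e l * a * w l) + e r * a * y = 0}"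
  have J: "two_sided_ideal ?J"
    unfolding two_sided_ideal_def
  proof (intro conjI ballI allI)
    show "0 \<in> ?J" by (rule CollectI, rule exI[of _ "\<lambda>_. 0"]) simp
  next
    fix y1 y2 assume "y1 \<in> ?J" "y2 \<in> ?J"
    then obtain w1 w2 where w1: "\<forall>a. (\<Sum>l<r. e l * a * w1 l) + e r * a * y1 = 0"
      and w2: "\<forall>a. (\<Sum>l<r. e l * a * w2 l) + e r * a * y2 = 0" by blast
    have "\<forall>a. (\<Sum>l<r. e l * a * (w1 l + w2 l)) + e r * a * (y1 + y2) = 0"
    proof
      fix a
      have "(\<Sum>l<r. e l * a * (w1 l + w2 l)) + e r * a * (y1 + y2)
          = ((\<Sum>l<r. e l * a * w1 l) + e r * a * y1) + ((\<Sum>l<r. e l * a * w2 l) + e r * a * y2)"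
        by (simp add: distrib_left sum.distrib)
      then show "(\<Sum>l<r. e l * a * (w1 l + w2 l)) + e r * a * (y1 + y2) = 0" using w1 w2 by simp
    qed
    then show "y1 + y2 \<in> ?J" by (intro CollectI exI[of _ "\<lambda>l. w1 l + w2 l"])
  next
    fix y assume "y \<in> ?J"
    then obtain w where w: "\<forall>a. (\<Sum>l<r. e l * a * w l) + e r * a * y = 0" by blast
    have "\<forall>a. (\<Sum>l<r. e l * a * (- w l)) + e r * a * (- y) = 0"
    proof
      fix a
      have "(\<Sum>l<r. e l * a * (- w l)) + e r * a * (- y) = - ((\<Sum>l<r. e l * a * w l) + e r * a * y)"
        by (simp add: sum_negf)
      then show "(\<Sum>l<r. e l * a * (- w l)) + e r * a * (- y) = 0" using w by simp
    qed
    then show "- y \<in> ?J" by (intro CollectI exI[of _ "\<lambda>l. - w l"])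
  next
    fix y t assume "y \<in> ?J"
    then obtain w where w: "\<forall>a. (\<Sum>l<r. e l * a * w l) + e r * a * y = 0" by blast
    have "\<forall>a. (\<Sum>l<r. e l * a * (t * w l)) + e r * a * (t * y) = 0"
    proof
      fix a
      have "(\<Sum>l<r. e l * a * (t * w l)) + e r * a * (t * y) = (\<Sum>l<r. e l * (a * t) * w l) + e r * (a * t) * y"
        by (simp add: mult.assoc)
      then show "(\<Sum>l<r. e l * a * (t * w l)) + e r * a * (t * y) = 0" using w by simp
    qed
    then show "t * y \<in> ?J" by (intro CollectI exI[of _ "\<lambda>l. t * w l"])
  next
    fix y t assume "y \<in> ?J"
    then obtain w where w: "\<forall>a. (\<Sum>l<r. e l * a * w l) + e r * a * y = 0" by blast
    have "\<forall>a. (\<Sum>l<r. e l * a * (w l * t)) + e r * a * (y * t) = 0"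
    proof
      fix a
      have "(\<Sum>l<r. e l * a * (w l * t)) + e r * a * (y * t) = ((\<Sum>l<r. e l * a * w l) + e r * a * y) * t"
        by (simp add: mult.assoc distrib_right sum_distrib_right)
      then show "(\<Sum>l<r. e l * a * (w l * t)) + e r * a * (y * t) = 0" using w by simp
    qed
    then show "y * t \<in> ?J" by (intro CollectI exI[of _ "\<lambda>l. w l * t"])
  qed
  have vr: "v r \<in> ?J"
    using Suc.prems(2) by (intro CollectI exI[of _ v]) simp
  have "?J \<noteq> UNIV"
  proof
    assume "?J = UNIV"
    then have "1 \<in> ?J" by simp
    then obtain w where w: "\<forall>a. (\<Sum>l<r. e l * a * w l) + e r * a * 1 = 0" by blast
    have wc: "w l \<in> centre" if l: "l < r" for l
    proof -
      have "\<forall>l<r. y * w l - w l * y = 0" for y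
      proof (rule Suc.IH[OF indr], rule allI)
        fix a
        have e1: "(\<Sum>l<r. e l * (a * y) * w l) + e r * (a * y) * 1 = 0" using w by blast
        have e2: "((\<Sum>l<r. e l * a * w l) + e r * a * 1) * y = 0" using w by simp
        have "(\<Sum>l<r. e l * a * (y * w l - w l * y))
            = ((\<Sum>l<r. e l * (a * y) * w l) + e r * (a * y) * 1) - ((\<Sum>l<r. e l * a * w l) + e r * a * 1) * y"
          by (simp add: right_diff_distrib sum_subtractf distrib_right sum_distrib_right mult.assoc)
        then show "(\<Sum>l<r. e l * a * (y * w l - w l * y)) = 0" using e1 e2 by simp
      qed
      then show ?thesis using l by (simp add: centre_iff)
    qed
    have "(\<Sum>l<r. e l * 1 * w l) + e r * 1 * 1 = 0" using w by blast
    then have "e r = - (\<Sum>l<r. e l * w l)" by (simp add: eq_neg_iff_add_eq_0 add.commute)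
    also have "\<dots> = (\<Sum>l<r. (- w l) * e l)"
      by (simp add: sum_negf[symmetric]) (rule sum.cong, simp, use wc in \<open>simp add: centre_iff\<close>)
    finally have "e r = (\<Sum>l<r. (- w l) * e l)" .
    moreover have "\<forall>l<r. - w l \<in> centre" using wc centre_basic by blast
    ultimately show False using notin[of "\<lambda>l. - w l"] by blast
  qed
  then have "?J = {0}" using simple_ideal[OF s J] by blast
  then have vr0: "v r = 0" using vr by blast
  have "\<forall>a. (\<Sum>l<r. e l * a * v l) = 0" using Suc.prems(2) vr0 by simp
  then have "\<forall>l<r. v l = 0" by (rule Suc.IH[OF indr])
  then show ?case using vr0 by (simp add: less_Suc_eq)
qed

lemma basis_exists:
  assumes cs: "central_simple TYPE('a::ring_1)"
  shows "\<exists>e r. indepF (centre::'a set) e r \<and> (\<forall>a. \<exists>k. (\<forall>l<r. k l \<in> centre) \<and> a = (\<Sum>l<r. k l * e l))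
           \<and> 0 < r \<and> e (r - 1) = 1"
proof -
  have s: "simple_ring TYPE('a)" using cs by (simp add: central_simple_def)
  have K: "subfield (centre::'a set) RR" by (rule cfield_subfield[OF centre_field[OF s]])
  have one0: "(1::'a) \<noteq> 0" using s by (simp add: simple_ring_def)
  interpret ring "RR::'a ring" by (rule ring_RR)
  obtain B :: "'a set" where fB: "finite B"
    and rep: "\<forall>a. \<exists>f. (\<forall>b\<in>B. f b \<in> centre) \<and> a = (\<Sum>b\<in>B. f b * b)"
    using cs by (auto simp: central_simple_def)
  obtain Us where Us: "set Us = B" "distinct Us" using finite_distinct_list[OF fB] by blast
  have bij: "bij_betw ((!) Us) {..<length Us} B" using bij_betw_nth[OF Us(2) refl Us(1)[symmetric]] .
  have spanUs': "a \<in> Span centre Us" for a :: 'a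
  proof -
    obtain f where f: "\<forall>b\<in>B. f b \<in> centre" "a = (\<Sum>b\<in>B. f b * b)" using rep by blast
    have "a = (\<Sum>l<length Us. f (Us!l) * Us!l)"
      using f(2) sum.reindex_bij_betw[OF bij, of "\<lambda>b. f b * b"] by simp
    moreover have "\<forall>l<length Us. f (Us!l) \<in> centre" using f(1) Us(1) by auto
    ultimately show "a \<in> Span centre Us" unfolding Span_RR[OF K]
      by (intro CollectI exI[of _ "\<lambda>l. f (Us!l)"]) blast
  qed
  have spanUs: "Span centre Us = UNIV" using spanUs' by blast
  obtain Vs where Vs: "independent centre Vs" "Span centre Vs = Span centre Us"
    using filter_base[OF K, of Us] by auto
  have dim: "dimension (length Vs) centre UNIV"
    using dimensionI[OF K Vs(1)] Vs(2) spanUs by simp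
  have sp0: "Span centre [] = {0::'a}" by simp
  have ind1: "independent centre [1::'a]"
    by (rule li_Cons) (use one0 sp0 in auto)
  obtain Ws where Ws: "independent centre (Ws @ [1])" "Span centre (Ws @ [1]) = UNIV"
    using complete_base[OF K dim ind1] by auto
  define e where "e = (\<lambda>l. (Ws @ [1]) ! l)"
  define r where "r = length (Ws @ [1::'a])"
  have "indepF centre e r"
    unfolding indepF_def e_def r_def using indep_RR_D[OF K Ws(1)] by blast
  moreover have "\<forall>a. \<exists>k. (\<forall>l<r. k l \<in> centre) \<and> a = (\<Sum>l<r. k l * e l)"
  proof
    fix a :: 'a
    have "a \<in> Span centre (Ws @ [1])" using Ws(2) by simp
    then show "\<exists>k. (\<forall>l<r. k l \<in> centre) \<and> a = (\<Sum>l<r. k l * e l)"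
      unfolding Span_RR[OF K] e_def r_def by blast
  qed
  moreover have "0 < r" "e (r - 1) = 1" by (simp_all add: e_def r_def nth_append)
  ultimately show ?thesis by blast
qed



lemma centre_mult_comm: "z \<in> centre \<Longrightarrow> z * a = a * z"
  by (simp add: centre_iff)

lemma centre_closed:
  "a \<in> centre \<Longrightarrow> b \<in> centre \<Longrightarrow> a + b \<in> centre"
  "a \<in> centre \<Longrightarrow> b \<in> centre \<Longrightarrow> a - b \<in> centre"
  "a \<in> centre \<Longrightarrow> - a \<in> centre"
  "a \<in> centre \<Longrightarrow> b \<in> centre \<Longrightarrow> a * (b::'a::ring_1) \<in> centre"
proof -
  assume a: "a \<in> centre"
  show "- a \<in> centre" using a by (simp add: centre_iff)
  assume b: "b \<in> centre"
  show "a + b \<in> centre" using a b by (simp add: centre_iff distrib_left distrib_right)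
  show "a - b \<in> centre" using a b by (simp add: centre_iff left_diff_distrib right_diff_distrib)
  show "a * b \<in> centre" unfolding centre_iff
  proof
    fix x
    have "a * b * x = a * (x * b)" using b by (simp add: centre_iff mult.assoc)
    also have "\<dots> = (a * x) * b" by (simp add: mult.assoc)
    also have "\<dots> = x * (a * b)" using a by (simp add: centre_iff mult.assoc)
    finally show "a * b * x = x * (a * b)" .
  qed
qed

lemma centre_pull: "c \<in> centre \<Longrightarrow> x * (c * y) = c * (x * y)"
  by (metis centre_mult_comm mult.assoc)

lemma indepF_D:
  assumes "indepF K e r" "\<forall>l<r. k l \<in> K" "(\<Sum>l<r. k l * e l) = 0" "l < r"
  shows "k l = 0"
  using assms unfolding indepF_def by blast

lemma tensor_expand:
  assumes "\<forall>k<r. c k \<in> centre"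
  shows "(\<Sum>j<(n::nat). e j * (\<Sum>k<(r::nat). c k * f k) * w j) = (\<Sum>k<r. c k * (\<Sum>j<n. e j * f k * w j))"
proof -
  have "(\<Sum>j<n. e j * (\<Sum>k<r. c k * f k) * w j) = (\<Sum>j<n. \<Sum>k<r. e j * (c k * f k) * w j)"
    by (simp add: sum_distrib_left sum_distrib_right)
  also have "\<dots> = (\<Sum>j<n. \<Sum>k<r. c k * (e j * f k * w j))"
  proof (intro sum.cong refl)
    fix j k assume "k \<in> {..<r}"
    then have "c k \<in> centre" using assms by auto
    then show "e j * (c k * f k) * w j = c k * (e j * f k * w j)"
      by (metis centre_mult_comm mult.assoc)
  qed
  also have "\<dots> = (\<Sum>k<r. c k * (\<Sum>j<n. e j * f k * w j))"
    by (subst sum.swap) (simp add: sum_distrib_left)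
  finally show ?thesis .
qed

lemma inner_sigma:
  fixes \<sigma> X :: "'a::ring_1 \<Rightarrow> 'a"
  assumes cs: "central_simple TYPE('a)"
    and sadd: "\<And>a b. \<sigma> (a + b) = \<sigma> a + \<sigma> b" and smul: "\<And>a b. \<sigma> (a * b) = \<sigma> a * \<sigma> b"
    and s1: "\<sigma> 1 = 1" and sZ: "\<And>z. z \<in> centre \<Longrightarrow> \<sigma> z = z"
    and Xadd: "\<And>a b. X (a + b) = X a + X b" and XZ: "\<And>z a. z \<in> centre \<Longrightarrow> X (z * a) = z * X a"
    and Xder: "\<And>a b. X (a * b) = X a * b + \<sigma> a * X b"
  shows "\<exists>c. \<forall>a. X a = c * a - \<sigma> a * c"
proof -
  have s: "simple_ring TYPE('a)" using cs by (simp add: central_simple_def)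
  have one0: "(1::'a) \<noteq> 0" using s by (simp add: simple_ring_def)
  have cf: "cfield (centre::'a set)" by (rule centre_field[OF s])
  obtain e r where ind: "indepF (centre::'a set) e r"
    and spn: "\<forall>a. \<exists>k. (\<forall>l<r. k l \<in> centre) \<and> a = (\<Sum>l<r. k l * e l)"
    and r0: "0 < r" and er: "e (r - 1) = 1"
    using basis_exists[OF cs] by blast
  define co where "co a = (SOME k. (\<forall>l<r. k l \<in> centre) \<and> a = (\<Sum>l<r. k l * e l))" for a
  have co: "(\<forall>l<r. co a l \<in> centre) \<and> a = (\<Sum>l<r. co a l * e l)" for a
    unfolding co_def using someI_ex[OF spn[rule_format, of a]] .
  have co_sum: "(\<Sum>l<r. co a l * e l) = a" for a using co[of a] by simp
  have co_c: "l < r \<Longrightarrow> co a l \<in> centre" for a l using co[of a] by simp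
  have co_unique: "k l = co a l" if kc: "\<forall>l<r. k l \<in> centre" and ka: "a = (\<Sum>l<r. k l * e l)" and l: "l < r" for k a l
  proof -
    have "(\<Sum>l<r. (k l - co a l) * e l) = (\<Sum>l<r. k l * e l) - (\<Sum>l<r. co a l * e l)"
      by (simp add: left_diff_distrib sum_subtractf)
    also have "\<dots> = 0" using ka co[of a] by simp
    finally have "(\<Sum>l<r. (k l - co a l) * e l) = 0" .
    moreover have "\<forall>l<r. k l - co a l \<in> centre" using kc co[of a] centre_closed(2) by blast
    ultimately have "k l - co a l = 0" using indepF_D[OF ind, of "\<lambda>l. k l - co a l", OF _ _ l] by blast
    then show ?thesis by simp
  qed
  define K2 where "K2 = (\<lambda>z. (\<lambda>_::nat. z)) ` (centre::'a set)"
  have cf2: "cfield K2"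
    unfolding cfield_def
  proof (intro conjI ballI impI)
    show "(1::nat \<Rightarrow> 'a) \<noteq> 0" using one0 by (metis one_fun_apply zero_fun_apply)
    show "K2 \<subseteq> centre"
    proof
      fix k assume "k \<in> K2"
      then obtain z where z: "z \<in> centre" "k = (\<lambda>_. z)" unfolding K2_def by blast
      show "k \<in> centre" unfolding centre_iff
        by (auto simp: z(2) fun_eq_iff centre_mult_comm[OF z(1)])
    qed
    show "1 \<in> K2" unfolding K2_def using centre_basic(2) by (auto simp: one_fun_def)
  next
    fix a b assume "a \<in> K2" "b \<in> K2"
    then obtain x y where "x \<in> centre" "y \<in> centre" "a = (\<lambda>_. x)" "b = (\<lambda>_. y)" unfolding K2_def by blast
    then show "a + b \<in> K2" "a * b \<in> K2" unfolding K2_def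
       apply -
       apply (rule image_eqI[of _ _ "x + y"]) apply (simp add: fun_eq_iff) apply (simp add: centre_closed)
      apply (rule image_eqI[of _ _ "x * y"]) apply (simp add: fun_eq_iff) apply (simp add: centre_closed)
      done
  next
    fix a assume "a \<in> K2"
    then obtain x where "x \<in> centre" "a = (\<lambda>_. x)" unfolding K2_def by blast
    then show "- a \<in> K2" unfolding K2_def
      by (auto intro!: image_eqI[of _ _ "- x"] centre_closed simp: fun_eq_iff)
  next
    fix a assume "a \<in> K2" "a \<noteq> 0"
    then obtain x where x: "x \<in> centre" "a = (\<lambda>_. x)" unfolding K2_def by blast
    with \<open>a \<noteq> 0\<close> have "x \<noteq> 0" by (auto simp: fun_eq_iff)
    then obtain y where "y \<in> centre" "x * y = 1" using cf x(1) unfolding cfield_def by blast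
    then show "\<exists>b\<in>K2. a * b = 1" unfolding K2_def using x(2)
      by (intro bexI[of _ "\<lambda>_. y"]) (auto simp: fun_eq_iff)
  qed
  have K2: "subfield K2 (RR::(nat \<Rightarrow> 'a) ring)" by (rule cfield_subfield[OF cf2])
  define vec where "vec i j = (\<lambda>t::nat. if t = i then e j else 0)" for i j
  define S where "S = map (\<lambda>p. vec (p div r) (p mod r)) [0..<r*r]"
  define V where "V = ring.Span RR K2 S"
  have lenS: "length S = r * r" by (simp add: S_def)
  have nthS: "p < r * r \<Longrightarrow> S ! p = vec (p div r) (p mod r)" for p by (simp add: S_def)
  have vecS: "vec i j \<in> V" if "i < r" "j < r" for i j
  proof -
    have "i * r + j < Suc i * r" using that by simp
    also have "Suc i * r \<le> r * r" using that by (intro mult_le_mono1) simp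
    finally have p: "i * r + j < r * r" .
    have "S ! (i * r + j) = vec i j" using nthS[OF p] that by simp
    then have "vec i j \<in> set S" using p lenS by (metis nth_mem)
    then show ?thesis using Span_RR_props(4)[OF K2, of S] V_def by blast
  qed
  have K2c: "(\<lambda>_. z) \<in> K2" if "z \<in> centre" for z using that unfolding K2_def by blast
  have Vchar: "w \<in> V \<longleftrightarrow> (\<forall>i\<ge>r. w i = 0)" for w
  proof
    assume "w \<in> V"
    then obtain k where k: "\<forall>p<r * r. k p \<in> K2" and w: "w = (\<Sum>p<r * r. k p * S ! p)"
      unfolding V_def Span_RR[OF K2] lenS by blast
    show "\<forall>i\<ge>r. w i = 0"
    proof (intro allI impI)
      fix i assume i: "r \<le> i"
      have "w i = (\<Sum>p<r * r. k p i * (S ! p) i)" by (simp add: w sum_fun_apply)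
      also have "\<dots> = 0"
      proof (rule sum.neutral, rule ballI)
        fix p assume "p \<in> {..<r * r}"
        then have "p div r < r" by (simp add: less_mult_imp_div_less)
        then have "(S ! p) i = 0" using \<open>p \<in> {..<r * r}\<close> i by (simp add: nthS vec_def)
        then show "k p i * (S ! p) i = 0" by simp
      qed
      finally show "w i = 0" .
    qed
  next
    assume w0: "\<forall>i\<ge>r. w i = 0"
    have eq: "w = (\<Sum>i<r. 1 * (\<Sum>j<r. (\<lambda>_. co (w i) j) * vec i j))"
    proof (rule ext)
      fix t
      have "(\<Sum>i<r. 1 * (\<Sum>j<r. (\<lambda>_. co (w i) j) * vec i j)) t
          = (\<Sum>i<r. \<Sum>j<r. co (w i) j * vec i j t)"
        by (simp add: sum_fun_apply)
      also have "\<dots> = (\<Sum>i<r. if t = i then (\<Sum>j<r. co (w i) j * e j) else 0)"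
        by (rule sum.cong[OF refl]) (simp add: vec_def)
      also have "\<dots> = (if t < r then w t else 0)"
        by (simp add: sum.delta co_sum)
      also have "\<dots> = w t" using w0 by (simp add: not_less)
      finally show "w t = (\<Sum>i<r. 1 * (\<Sum>j<r. (\<lambda>_. co (w i) j) * vec i j)) t" by simp
    qed
    have "(\<Sum>i<r. 1 * (\<Sum>j<r. (\<lambda>_. co (w i) j) * vec i j)) \<in> V"
      unfolding V_def
    proof (rule Span_RR_sum[OF K2])
      show "\<forall>l<r. (1::nat \<Rightarrow> 'a) \<in> K2" using cf2 by (simp add: cfield_def)
      show "\<forall>i<r. (\<Sum>j<r. (\<lambda>_. co (w i) j) * vec i j) \<in> ring.Span RR K2 S"
        using Span_RR_sum[OF K2] K2c co_c vecS V_def by simp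
    qed
    then show "w \<in> V" using eq by simp
  qed
  define M where "M w = (\<lambda>k. if k < r then \<Sum>j<r. e j * e k * w j else 0)" for w
  define t where "t = (\<lambda>k::nat. if k = r - 1 then (1::'a) else 0)"
  have "\<exists>w\<in>V. M w = t"
    unfolding V_def
  proof (rule inj_surj_RR[OF K2])
    fix w assume "w \<in> ring.Span RR K2 S"
    show "M w \<in> ring.Span RR K2 S" unfolding V_def[symmetric] Vchar by (simp add: M_def)
  next
    fix u w
    show "M (u + w) = M u + M w"
      by (rule ext) (simp add: M_def distrib_left sum.distrib)
  next
    fix k w assume "k \<in> K2"
    then obtain z where z: "z \<in> centre" "k = (\<lambda>_. z)" unfolding K2_def by blast
    show "M (k * w) = k * M w"
    proof (rule ext)
      fix i
      have "(\<Sum>j<r. e j * e i * (z * w j)) = z * (\<Sum>j<r. e j * e i * w j)"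
        unfolding sum_distrib_left
        by (rule sum.cong) (use z(1) in \<open>auto simp: centre_iff mult.assoc\<close>)
      then show "M (k * w) i = (k * M w) i" by (simp add: M_def z(2))
    qed
  next
    fix w assume wV: "w \<in> ring.Span RR K2 S" and Mw: "M w = 0"
    have "\<forall>a. (\<Sum>j<r. e j * a * w j) = 0"
    proof
      fix a
      have "(\<Sum>j<r. e j * a * w j) = (\<Sum>j<r. e j * (\<Sum>k<r. co a k * e k) * w j)"
        using co[of a] by simp
      also have "\<dots> = (\<Sum>k<r. co a k * (\<Sum>j<r. e j * e k * w j))"
        by (rule tensor_expand) (use co in blast)
      also have "\<dots> = 0"
      proof (rule sum.neutral, rule ballI)
        fix k assume "k \<in> {..<r}"
        then have "(\<Sum>j<r. e j * e k * w j) = M w k" by (simp add: M_def)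
        then show "co a k * (\<Sum>j<r. e j * e k * w j) = 0" using Mw by simp
      qed
      finally show "(\<Sum>j<r. e j * a * w j) = 0" .
    qed
    then have "\<forall>j<r. w j = 0" by (rule tensor_indep[OF s ind])
    moreover have "\<forall>i\<ge>r. w i = 0" using wV Vchar V_def by blast
    ultimately show "w = 0" by (intro ext) (metis not_le zero_fun_apply)
  next
    show "t \<in> ring.Span RR K2 S" unfolding V_def[symmetric] Vchar t_def using r0 by auto
  qed
  then obtain w where wV: "w \<in> V" and Mw: "M w = t" by blast
  define \<tau> where "\<tau> a = (\<Sum>j<r. e j * a * w j)" for a
  have tau_co: "\<tau> a = co a (r - 1)" for a
  proof -
    have "\<tau> a = (\<Sum>j<r. e j * (\<Sum>k<r. co a k * e k) * w j)"
      unfolding \<tau>_def using co[of a] by simp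
    also have "\<dots> = (\<Sum>k<r. co a k * (\<Sum>j<r. e j * e k * w j))"
      by (rule tensor_expand) (use co in blast)
    also have "\<dots> = (\<Sum>k<r. co a k * t k)"
      by (rule sum.cong) (auto simp: Mw[symmetric] M_def)
    also have "\<dots> = (\<Sum>k<r. if k = r - 1 then co a k else 0)"
      by (rule sum.cong) (auto simp: t_def)
    also have "\<dots> = co a (r - 1)"
      using r0 by (simp add: sum.delta)
    finally show ?thesis .
  qed
  have tauc: "\<tau> a \<in> centre" for a using tau_co co r0 by simp
  have tau1: "\<tau> 1 = 1"
  proof -
    have "(\<Sum>l<r. (if l = r - 1 then 1 else 0) * e l) = (\<Sum>l<r. if l = r - 1 then e l else 0)"
      by (rule sum.cong) auto
    also have "\<dots> = 1" using r0 er by (simp add: sum.delta)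
    finally have "(1::'a) = (\<Sum>l<r. (if l = r - 1 then 1 else 0) * e l)" by simp
    then have "(\<lambda>l. if l = r - 1 then (1::'a) else 0) (r - 1) = co 1 (r - 1)"
      by (intro co_unique) (auto simp: centre_iff, use r0 in auto)
    then show ?thesis using tau_co by simp
  qed
  have star: "\<forall>l<r. (\<Sum>j<r. co (b * e j) l * w j) - w l * b = 0" for b
  proof (rule tensor_indep[OF s ind], rule allI)
    fix a
    have "(\<Sum>l<r. e l * a * ((\<Sum>j<r. co (b * e j) l * w j) - w l * b))
        = (\<Sum>l<r. \<Sum>j<r. e l * a * (co (b * e j) l * w j)) - (\<Sum>l<r. e l * a * w l) * b"
    proof -
      have "(\<Sum>l<r. e l * a * ((\<Sum>j<r. co (b * e j) l * w j) - w l * b))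
          = (\<Sum>l<r. e l * a * (\<Sum>j<r. co (b * e j) l * w j) - e l * a * w l * b)"
        by (rule sum.cong) (simp_all add: right_diff_distrib mult.assoc)
      also have "\<dots> = (\<Sum>l<r. e l * a * (\<Sum>j<r. co (b * e j) l * w j)) - (\<Sum>l<r. e l * a * w l * b)"
        by (rule sum_subtractf)
      also have "(\<Sum>l<r. e l * a * w l * b) = (\<Sum>l<r. e l * a * w l) * b"
        by (rule sum_distrib_right[symmetric])
      also have "(\<Sum>l<r. e l * a * (\<Sum>j<r. co (b * e j) l * w j)) = (\<Sum>l<r. \<Sum>j<r. e l * a * (co (b * e j) l * w j))"
        by (rule sum.cong) (simp_all add: sum_distrib_left)
      finally show ?thesis .
    qed
    also have "(\<Sum>l<r. \<Sum>j<r. e l * a * (co (b * e j) l * w j)) = (\<Sum>j<r. (\<Sum>l<r. co (b * e j) l * e l) * a * w j)"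
    proof -
      have "(\<Sum>l<r. \<Sum>j<r. e l * a * (co (b * e j) l * w j)) = (\<Sum>j<r. \<Sum>l<r. co (b * e j) l * e l * a * w j)"
        apply (subst sum.swap)
        apply (intro sum.cong refl)
        subgoal for j l by (subst centre_pull[OF co_c[of l "b * e j"]]) (simp_all add: mult.assoc)
        done
      also have "\<dots> = (\<Sum>j<r. (\<Sum>l<r. co (b * e j) l * e l) * a * w j)"
        by (simp add: sum_distrib_right)
      finally show ?thesis .
    qed
    also have "\<dots> = (\<Sum>j<r. b * e j * a * w j)"
      by (simp add: co_sum)
    also have "\<dots> = b * \<tau> a"
      by (simp add: \<tau>_def sum_distrib_left mult.assoc)
    also have "(\<Sum>l<r. e l * a * w l) * b = \<tau> a * b" by (simp add: \<tau>_def)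
    finally show "(\<Sum>l<r. e l * a * ((\<Sum>j<r. co (b * e j) l * w j) - w l * b)) = 0"
      using tauc[of a] by (simp add: centre_iff)
  qed
  have s0: "\<sigma> 0 = 0" using sadd[of 0 0] by simp
  have X0: "X 0 = 0" using Xadd[of 0 0] by simp
  have ssum: "\<sigma> (\<Sum>l<(N::nat). f l) = (\<Sum>l<N. \<sigma> (f l))" for N f
    by (induction N) (simp_all add: s0 sadd)
  have Xsum: "X (\<Sum>l<(N::nat). f l) = (\<Sum>l<N. X (f l))" for N f
    by (induction N) (simp_all add: X0 Xadd)
  define d where "d = (\<Sum>l<r. \<sigma> (e l) * X (w l))"
  have key: "d * b = \<sigma> b * d - X b" for b
  proof -
    have "d * b = (\<Sum>l<r. \<sigma> (e l) * (X (w l) * b))"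
      by (simp add: d_def sum_distrib_right mult.assoc)
    also have "\<dots> = (\<Sum>l<r. \<sigma> (e l) * X (w l * b)) - (\<Sum>l<r. \<sigma> (e l) * \<sigma> (w l)) * X b"
      by (simp add: Xder distrib_left sum.distrib sum_distrib_right mult.assoc)
    also have "(\<Sum>l<r. \<sigma> (e l) * \<sigma> (w l)) = 1"
    proof -
      have "(\<Sum>l<r. \<sigma> (e l) * \<sigma> (w l)) = \<sigma> (\<tau> 1)" by (simp add: \<tau>_def ssum smul)
      then show ?thesis using tau1 s1 by simp
    qed
    also have "(\<Sum>l<r. \<sigma> (e l) * X (w l * b)) = \<sigma> b * d"
    proof -
      have "(\<Sum>l<r. \<sigma> (e l) * X (w l * b)) = (\<Sum>l<r. \<sigma> (e l) * X (\<Sum>j<r. co (b * e j) l * w j))"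
        using star[of b] by (intro sum.cong refl) simp
      also have "\<dots> = (\<Sum>l<r. \<Sum>j<r. \<sigma> (e l) * (co (b * e j) l * X (w j)))"
        apply (rule sum.cong[OF refl])
        subgoal for l unfolding Xsum sum_distrib_left
          by (rule sum.cong[OF refl]) (simp add: XZ co_c)
        done
      also have "\<dots> = (\<Sum>j<r. \<Sum>l<r. \<sigma> (co (b * e j) l * e l) * X (w j))"
        apply (subst sum.swap)
        apply (intro sum.cong refl)
        subgoal for j l by (subst centre_pull[OF co_c[of l "b * e j"]]) (simp_all add: smul sZ[OF co_c] mult.assoc)
        done
      also have "\<dots> = (\<Sum>j<r. \<sigma> (b * e j) * X (w j))"
      proof (rule sum.cong[OF refl])
        fix j
        have "(\<Sum>l<r. \<sigma> (co (b * e j) l * e l) * X (w j)) = \<sigma> (\<Sum>l<r. co (b * e j) l * e l) * X (w j)"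
          by (simp add: ssum sum_distrib_right)
        then show "(\<Sum>l<r. \<sigma> (co (b * e j) l * e l) * X (w j)) = \<sigma> (b * e j) * X (w j)"
          by (simp add: co_sum)
      qed
      also have "\<dots> = \<sigma> b * d"
        by (simp add: d_def smul sum_distrib_left mult.assoc)
      finally show ?thesis .
    qed
    finally show ?thesis by simp
  qed
  show ?thesis
  proof (intro exI allI)
    fix a
    show "X a = (- d) * a - \<sigma> a * (- d)" using key[of a] by simp
  qed
qed



fun esym :: "complex \<Rightarrow> nat \<Rightarrow> nat \<Rightarrow> complex" where
  "esym q 0 j = (if j = 0 then 1 else 0)"
| "esym q (Suc k) j = (if j = 0 then 1 else esym q k j + q ^ k * esym q k (j - 1))"

lemma esym_0 [simp]: "esym q k 0 = 1"
  by (cases k) auto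

lemma esym_gt: "k < j \<Longrightarrow> esym q k j = 0"
  by (induction k arbitrary: j) auto

lemma esym_rec: "esym q k (Suc j) * (q ^ Suc j - 1) = esym q k j * (q ^ k - q ^ j)"
proof (induction k arbitrary: j)
  case 0 then show ?case by simp
next
  case (Suc k)
  show ?case
  proof (cases j)
    case 0
    have "esym q k 1 * (q - 1) = q ^ k - 1" using Suc.IH[of 0] by simp
    then show ?thesis using 0 by (simp add: algebra_simps)
  next
    case (Suc i)
    have ih1: "esym q k (Suc (Suc i)) * (q ^ Suc (Suc i) - 1) = esym q k (Suc i) * (q ^ k - q ^ Suc i)"
      using Suc.IH[of "Suc i"] .
    have ih2: "esym q k (Suc i) * (q ^ Suc i - 1) = esym q k i * (q ^ k - q ^ i)"
      using Suc.IH[of i] .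
    have "esym q (Suc k) (Suc j) * (q ^ Suc j - 1)
        = esym q k (Suc (Suc i)) * (q ^ Suc (Suc i) - 1) + q ^ k * esym q k (Suc i) * (q ^ Suc (Suc i) - 1)"
      using Suc by (simp add: algebra_simps)
    also have "\<dots> = esym q k (Suc i) * (q ^ k - q ^ Suc i) + q ^ k * esym q k (Suc i) * (q ^ Suc (Suc i) - 1)"
      using ih1 by simp
    also have "\<dots> = esym q k (Suc i) * (q ^ Suc k - q ^ Suc i) + q * (q ^ k * (esym q k (Suc i) * (q ^ Suc i - 1)))"
      by (simp add: algebra_simps)
    also have "\<dots> = esym q k (Suc i) * (q ^ Suc k - q ^ Suc i) + q * (q ^ k * (esym q k i * (q ^ k - q ^ i)))"
      using ih2 by simp
    also have "\<dots> = esym q (Suc k) j * (q ^ Suc k - q ^ j)"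
      using Suc by (simp add: algebra_simps)
    finally show ?thesis .
  qed
qed

lemma esym_eval: "(\<Sum>j\<le>k. esym q k j * y ^ j) = (\<Prod>t<k. 1 + y * q ^ t)"
proof (induction k)
  case 0 then show ?case by simp
next
  case (Suc k)
  have h1: "(\<Sum>j\<le>Suc k. esym q (Suc k) j * y ^ j) = 1 + (\<Sum>j\<le>k. esym q (Suc k) (Suc j) * y ^ Suc j)"
    by (subst sum.atMost_Suc_shift) simp
  have h2: "(\<Sum>j\<le>k. esym q (Suc k) (Suc j) * y ^ Suc j)
      = (\<Sum>j\<le>k. esym q k (Suc j) * y ^ Suc j) + y * q ^ k * (\<Sum>j\<le>k. esym q k j * y ^ j)"
    by (simp add: algebra_simps sum.distrib sum_distrib_left)
  have h3: "1 + (\<Sum>j\<le>k. esym q k (Suc j) * y ^ Suc j) = (\<Sum>j\<le>Suc k. esym q k j * y ^ j)"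
    by (subst sum.atMost_Suc_shift) simp
  have h4: "(\<Sum>j\<le>Suc k. esym q k j * y ^ j) = (\<Sum>j\<le>k. esym q k j * y ^ j)"
    by (simp add: esym_gt)
  have "(\<Sum>j\<le>Suc k. esym q (Suc k) j * y ^ j) = (\<Sum>j\<le>k. esym q k j * y ^ j) * (1 + y * q ^ k)"
    using h1 h2 h3 h4 by (simp add: algebra_simps)
  then show ?case using Suc.IH by simp
qed

lemma esym_root_vanish:
  assumes qm: "q ^ m = 1" and prim: "\<forall>j. 0 < j \<and> j < m \<longrightarrow> q ^ j \<noteq> 1"
  shows "0 < j \<Longrightarrow> j < m \<Longrightarrow> esym q m j = 0"
proof (induction j)
  case 0 then show ?case by simp
next
  case (Suc i)
  have "esym q m (Suc i) * (q ^ Suc i - 1) = esym q m i * (1 - q ^ i)"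
    using esym_rec[of q m i] qm by simp
  also have "\<dots> = 0"
  proof (cases i)
    case 0 then show ?thesis by simp
  next
    case (Suc i') then show ?thesis using Suc.IH Suc.prems by simp
  qed
  finally have "esym q m (Suc i) * (q ^ Suc i - 1) = 0" .
  moreover have "q ^ Suc i - 1 \<noteq> 0" using prim Suc.prems by auto
  ultimately show ?case by simp
qed

lemma esym_root_top:
  assumes m: "0 < m" and qm: "q ^ m = 1" and prim: "\<forall>j. 0 < j \<and> j < m \<longrightarrow> q ^ j \<noteq> 1"
  shows "(-1) ^ m * esym q m m = -1"
proof -
  have "(\<Sum>j\<le>m. esym q m j * (-1) ^ j) = (\<Prod>t<m. 1 + (-1) * q ^ t)" by (rule esym_eval)
  also have "\<dots> = 0" using m by (intro prod_zero) (auto intro!: bexI[of _ 0])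
  finally have s: "(\<Sum>j\<le>m. esym q m j * (-1) ^ j) = 0" .
  have "(\<Sum>j\<le>m. esym q m j * (-1) ^ j) = (\<Sum>j\<in>{0, m}. esym q m j * (-1) ^ j)"
    by (rule sum.mono_neutral_right) (auto simp: esym_root_vanish[OF qm prim])
  also have "\<dots> = 1 + esym q m m * (-1) ^ m" using m by simp
  finally show ?thesis using s by (simp add: algebra_simps eq_neg_iff_add_eq_0)
qed

lemma alg_facts:
  assumes alg: "complex_algebra (\<iota>::complex \<Rightarrow> 'a::ring_1)"
  shows "\<iota> 1 = 1" "\<iota> (z + w) = \<iota> z + \<iota> w" "\<iota> (z * w) = \<iota> z * \<iota> w" "\<iota> z * a = a * \<iota> z"
    "\<iota> 0 = 0" "\<iota> (- z) = - \<iota> z" "\<iota> (z - w) = \<iota> z - \<iota> w"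
    "\<iota> (\<Sum>i<(N::nat). f i) = (\<Sum>i<N. \<iota> (f i))"
    "\<iota> (\<Sum>i\<le>(N::nat). f i) = (\<Sum>i\<le>N. \<iota> (f i))"
    "x * (\<iota> z * y) = \<iota> z * (x * y)"
    "\<iota> z * (\<iota> w * y) = \<iota> (z * w) * y"
    "\<iota> z * x * (\<iota> w * y) = \<iota> (z * w) * (x * y)"
proof -
  have A: "\<iota> 1 = 1 \<and> (\<forall>z w. \<iota> (z + w) = \<iota> z + \<iota> w) \<and> (\<forall>z w. \<iota> (z * w) = \<iota> z * \<iota> w)
     \<and> (\<forall>z a. \<iota> z * a = a * \<iota> z)" using alg unfolding complex_algebra_def .
  have i1: "\<iota> 1 = 1" using A by (rule conjunct1)
  have A2: "\<forall>z w. \<iota> (z + w) = \<iota> z + \<iota> w" using A by (rule conjunct1[OF conjunct2])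
  have A3: "\<forall>z w. \<iota> (z * w) = \<iota> z * \<iota> w" using A by (rule conjunct1[OF conjunct2[OF conjunct2]])
  have A4: "\<forall>z a. \<iota> z * a = a * \<iota> z" using A by (rule conjunct2[OF conjunct2[OF conjunct2]])
  note ia' = A2[rule_format] and im' = A3[rule_format] and ic = A4[rule_format]
  show "\<iota> 1 = 1" "\<iota> (z + w) = \<iota> z + \<iota> w" "\<iota> (z * w) = \<iota> z * \<iota> w" "\<iota> z * a = a * \<iota> z"
    by (rule i1, rule ia', rule im', rule ic)
  show i0: "\<iota> 0 = 0" using ia'[of 0 0] by simp
  have ineg': "\<iota> (- z) = - \<iota> z" for z
  proof -
    have "\<iota> z + \<iota> (- z) = 0" using ia'[of z "- z"] i0 by simp
    then show ?thesis using minus_unique by metis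
  qed
  show "\<iota> (- z) = - \<iota> z" by (rule ineg')
  show "\<iota> (z - w) = \<iota> z - \<iota> w" using ia'[of z "- w"] ineg'[of w] by simp
  show "\<iota> (\<Sum>i<(N::nat). f i) = (\<Sum>i<N. \<iota> (f i))"
    by (induction N) (simp_all add: i0 ia')
  show "\<iota> (\<Sum>i\<le>(N::nat). f i) = (\<Sum>i\<le>N. \<iota> (f i))"
    by (induction N) (simp_all add: i0 ia')
  have il: "x * (\<iota> z * y) = \<iota> z * (x * y)" for x y z
  proof -
    have "x * (\<iota> z * y) = (x * \<iota> z) * y" by (simp add: mult.assoc)
    also have "\<dots> = (\<iota> z * x) * y" by (simp only: ic[of z x])
    finally show ?thesis by (simp add: mult.assoc)
  qed
  show "x * (\<iota> z * y) = \<iota> z * (x * y)" by (rule il)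
  show ic2: "\<iota> z * (\<iota> w * y) = \<iota> (z * w) * y" by (simp add: im' mult.assoc)
  show "\<iota> z * x * (\<iota> w * y) = \<iota> (z * w) * (x * y)"
  proof -
    have "\<iota> z * x * (\<iota> w * y) = \<iota> z * (x * (\<iota> w * y))" by (simp add: mult.assoc)
    also have "\<dots> = \<iota> z * (\<iota> w * (x * y))" by (simp only: il[of x w y])
    finally show ?thesis by (simp add: im' mult.assoc)
  qed
qed

lemma Xpow:
  fixes \<iota> :: "complex \<Rightarrow> 'a::ring_1" and G X :: "'a \<Rightarrow> 'a"
  assumes alg: "complex_algebra \<iota>"
    and Gadd: "\<And>a b. G (a + b) = G a + G b" and Gmul: "\<And>a b. G (a * b) = G a * G b" and G1: "G 1 = 1"
    and Gsm: "\<And>z a. G (\<iota> z * a) = \<iota> z * G a"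
    and Gc: "G c = \<iota> q * c" and Xdef: "\<And>b. X b = c * b - G b * c"
    and Ga: "G a = \<iota> lam * a"
  shows "(X ^^ k) a = (\<Sum>j\<le>k. \<iota> ((- lam) ^ j * esym q k j) * (c ^ (k - j) * a * c ^ j))"
proof -
  note af = alg_facts[OF alg]
  have G0: "G 0 = 0" using Gadd[of 0 0] by simp
  have Gpow: "G (c ^ p) = \<iota> (q ^ p) * c ^ p" for p
  proof (induction p)
    case 0 then show ?case using G1 af(1) by simp
  next
    case (Suc p)
    have "G (c ^ Suc p) = \<iota> q * c * (\<iota> (q ^ p) * c ^ p)" using Suc by (simp add: Gmul Gc)
    also have "\<dots> = \<iota> (q * q ^ p) * (c * c ^ p)" by (simp only: af(12))
    finally show ?case by simp
  qed
  define T where "T k j = c ^ (k - j) * a * c ^ j" for k j :: nat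
  have XT: "X (T k j) = T (Suc k) j - \<iota> (lam * q ^ k) * T (Suc k) (Suc j)" if "j \<le> k" for k j
  proof -
    have GT: "G (T k j) = \<iota> (lam * q ^ k) * T k j"
    proof -
      have "G (T k j) = \<iota> (q ^ (k - j)) * c ^ (k - j) * (\<iota> lam * a) * (\<iota> (q ^ j) * c ^ j)"
        by (simp add: T_def Gmul Gpow Ga)
      also have "\<dots> = \<iota> (q ^ (k - j) * lam * q ^ j) * T k j"
        by (simp only: af(12) T_def)
      also have "q ^ (k - j) * lam * q ^ j = lam * q ^ k"
      proof -
        have "q ^ (k - j) * lam * q ^ j = lam * (q ^ (k - j) * q ^ j)" by (simp add: mult_ac)
        also have "\<dots> = lam * q ^ k" using that by (simp add: power_add[symmetric])
        finally show ?thesis .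
      qed
      finally show ?thesis .
    qed
    have "X (T k j) = c * T k j - \<iota> (lam * q ^ k) * T k j * c" by (simp add: Xdef GT)
    moreover have "c * T k j = T (Suc k) j" using that by (simp add: T_def Suc_diff_le mult.assoc)
    moreover have "T k j * c = T (Suc k) (Suc j)" by (simp add: T_def mult.assoc power_commutes)
    ultimately show ?thesis by (simp add: mult.assoc)
  qed
  have Xadd: "X (u + v) = X u + X v" for u v
    by (simp add: Xdef Gadd distrib_left distrib_right)
  have X0: "X 0 = 0" by (simp add: Xdef G0)
  have Xsm: "X (\<iota> z * u) = \<iota> z * X u" for z u
  proof -
    have "c * (\<iota> z * u) = \<iota> z * (c * u)" by (rule af(10))
    then show ?thesis by (simp add: Xdef Gsm right_diff_distrib mult.assoc)
  qed
  have Xsum: "X (\<Sum>j\<le>(N::nat). f j) = (\<Sum>j\<le>N. X (f j))" for N f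
    by (induction N) (simp_all add: X0 Xadd)
  define \<gamma> where "\<gamma> k j = (- lam) ^ j * esym q k j" for k j
  have "(X ^^ k) a = (\<Sum>j\<le>k. \<iota> (\<gamma> k j) * T k j)"
  proof (induction k)
    case 0 then show ?case by (simp add: \<gamma>_def T_def af(1))
  next
    case (Suc k)
    have "(X ^^ Suc k) a = (\<Sum>j\<le>k. \<iota> (\<gamma> k j) * X (T k j))"
      using Suc by (simp add: Xsum Xsm)
    also have "\<dots> = (\<Sum>j\<le>k. \<iota> (\<gamma> k j) * T (Suc k) j - \<iota> (lam * q ^ k * \<gamma> k j) * T (Suc k) (Suc j))"
    proof (rule sum.cong[OF refl])
      fix j assume "j \<in> {..k}"
      then have "X (T k j) = T (Suc k) j - \<iota> (lam * q ^ k) * T (Suc k) (Suc j)" by (intro XT) simp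
      then show "\<iota> (\<gamma> k j) * X (T k j) = \<iota> (\<gamma> k j) * T (Suc k) j - \<iota> (lam * q ^ k * \<gamma> k j) * T (Suc k) (Suc j)"
        by (simp add: right_diff_distrib af(11) mult.commute)
    qed
    also have "\<dots> = (\<Sum>j\<le>k. \<iota> (\<gamma> k j) * T (Suc k) j) - (\<Sum>j\<le>k. \<iota> (lam * q ^ k * \<gamma> k j) * T (Suc k) (Suc j))"
      by (rule sum_subtractf)
    also have "(\<Sum>j\<le>k. \<iota> (\<gamma> k j) * T (Suc k) j) = (\<Sum>j\<le>Suc k. \<iota> (\<gamma> k j) * T (Suc k) j)"
      by (simp add: \<gamma>_def esym_gt af(5))
    also have "\<dots> = T (Suc k) 0 + (\<Sum>j\<le>k. \<iota> (\<gamma> k (Suc j)) * T (Suc k) (Suc j))"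
      by (subst sum.atMost_Suc_shift) (simp add: \<gamma>_def af(1))
    finally have h: "(X ^^ Suc k) a = T (Suc k) 0 + (\<Sum>j\<le>k. \<iota> (\<gamma> k (Suc j)) * T (Suc k) (Suc j))
        - (\<Sum>j\<le>k. \<iota> (lam * q ^ k * \<gamma> k j) * T (Suc k) (Suc j))" .
    have h2: "(\<Sum>j\<le>k. \<iota> (\<gamma> k (Suc j)) * T (Suc k) (Suc j)) - (\<Sum>j\<le>k. \<iota> (lam * q ^ k * \<gamma> k j) * T (Suc k) (Suc j))
        = (\<Sum>j\<le>k. \<iota> (\<gamma> (Suc k) (Suc j)) * T (Suc k) (Suc j))"
    proof -
      have "(\<Sum>j\<le>k. \<iota> (\<gamma> k (Suc j)) * T (Suc k) (Suc j)) - (\<Sum>j\<le>k. \<iota> (lam * q ^ k * \<gamma> k j) * T (Suc k) (Suc j))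
          = (\<Sum>j\<le>k. \<iota> (\<gamma> k (Suc j) - lam * q ^ k * \<gamma> k j) * T (Suc k) (Suc j))"
        by (simp add: sum_subtractf[symmetric] af(7) left_diff_distrib)
      also have "\<dots> = (\<Sum>j\<le>k. \<iota> (\<gamma> (Suc k) (Suc j)) * T (Suc k) (Suc j))"
        by (rule sum.cong[OF refl]) (simp add: \<gamma>_def algebra_simps)
      finally show ?thesis .
    qed
    have h3: "T (Suc k) 0 + (\<Sum>j\<le>k. \<iota> (\<gamma> (Suc k) (Suc j)) * T (Suc k) (Suc j))
        = (\<Sum>j\<le>Suc k. \<iota> (\<gamma> (Suc k) j) * T (Suc k) j)"
      by (subst sum.atMost_Suc_shift) (simp add: \<gamma>_def af(1))
    have "(X ^^ Suc k) a = T (Suc k) 0 + ((\<Sum>j\<le>k. \<iota> (\<gamma> k (Suc j)) * T (Suc k) (Suc j))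
        - (\<Sum>j\<le>k. \<iota> (lam * q ^ k * \<gamma> k j) * T (Suc k) (Suc j)))"
      using h by (simp only: add_diff_eq)
    also have "\<dots> = T (Suc k) 0 + (\<Sum>j\<le>k. \<iota> (\<gamma> (Suc k) (Suc j)) * T (Suc k) (Suc j))"
      by (simp only: h2)
    also have "\<dots> = (\<Sum>j\<le>Suc k. \<iota> (\<gamma> (Suc k) j) * T (Suc k) j)" by (rule h3)
    finally show ?case .
  qed
  then show ?thesis by (simp add: \<gamma>_def T_def)
qed

lemma collapse:
  fixes \<iota> :: "complex \<Rightarrow> 'a::ring_1"
  assumes alg: "complex_algebra \<iota>" and m: "0 < m" and qm: "q ^ m = 1"
    and prim: "\<forall>j. 0 < j \<and> j < m \<longrightarrow> q ^ j \<noteq> 1"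
  shows "(\<Sum>j\<le>m. \<iota> ((- lam) ^ j * esym q m j) * (c ^ (m - j) * a * c ^ j)) = c ^ m * a - \<iota> (lam ^ m) * a * c ^ m"
proof -
  note af = alg_facts[OF alg]
  have "(\<Sum>j\<le>m. \<iota> ((- lam) ^ j * esym q m j) * (c ^ (m - j) * a * c ^ j))
      = (\<Sum>j\<in>{0, m}. \<iota> ((- lam) ^ j * esym q m j) * (c ^ (m - j) * a * c ^ j))"
    by (rule sum.mono_neutral_right) (auto simp: esym_root_vanish[OF qm prim] af(5))
  also have "\<dots> = c ^ m * a + \<iota> ((- lam) ^ m * esym q m m) * (a * c ^ m)"
    using m by (simp add: af(1))
  also have "(- lam) ^ m * esym q m m = - (lam ^ m)"
  proof -
    have "(- lam) ^ m * esym q m m = lam ^ m * ((-1) ^ m * esym q m m)"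
      by (simp add: power_minus[of lam] mult_ac)
    also have "\<dots> = - (lam ^ m)" using esym_root_top[OF m qm prim] by simp
    finally show ?thesis .
  qed
  finally show ?thesis by (simp add: af(6) mult.assoc)
qed



lemma part1:
  fixes \<iota> :: "complex \<Rightarrow> 'a::ring_1"
    and n m :: nat and q \<zeta> \<alpha> :: complex
  assumes alg: "complex_algebra \<iota>"
    and mpos: "0 < m" and npos: "0 < n" and mdvd: "m dvd n"
    and q: "primitive_root_of_unity m q"
    and zeta: "primitive_root_of_unity n \<zeta>" and zq: "\<zeta> ^ (n div m) = q"
    and cs: "central_simple TYPE('a)"
    and tma: "taft_module_algebra \<iota> n m \<alpha> q G X"
  shows "\<exists>c. G c = \<iota> (\<zeta> ^ (n div m)) * c
           \<and> (\<forall>i<n. \<forall>a. G a = \<iota> (\<zeta> ^ i) * a \<longrightarrow> X a = c * a - \<iota> (\<zeta> ^ i) * a * c)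
           \<and> (\<forall>i<n. \<forall>a. G a = \<iota> (\<zeta> ^ i) * a \<longrightarrow>
                c ^ m * a - \<iota> (\<zeta> ^ (m * i)) * a * c ^ m = \<iota> (\<alpha> * (1 - \<zeta> ^ (m * i))) * a)"
proof -
  note af = alg_facts[OF alg]
  have zn: "\<zeta> ^ n = 1" using zeta by (simp add: primitive_root_of_unity_def)
  have qm: "q ^ m = 1" and qprim: "\<forall>j. 0 < j \<and> j < m \<longrightarrow> q ^ j \<noteq> 1"
    using q by (simp_all add: primitive_root_of_unity_def)
  have qn: "q ^ n = 1"
  proof -
    obtain k where "n = m * k" using mdvd by blast
    then show ?thesis using qm by (simp add: power_mult)
  qed
  have q0: "q \<noteq> 0" using qm mpos by (metis power_0_left less_not_refl2 zero_neq_one)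
  have s: "simple_ring TYPE('a)" using cs by (simp add: central_simple_def)
  have one0: "(1::'a) \<noteq> 0" using s by (simp add: simple_ring_def)
  have cf: "cfield (centre::'a set)" by (rule centre_field[OF s])
  have Gadd: "\<And>a b. G (a + b) = G a + G b" and Gsm: "\<And>z a. G (\<iota> z * a) = \<iota> z * G a"
    and Xadd: "\<And>a b. X (a + b) = X a + X b" and Xsm: "\<And>z a. X (\<iota> z * a) = \<iota> z * X a"
    and Xm: "\<And>a. (X ^^ m) a = \<iota> \<alpha> * (a - (G ^^ m) a)"
    and Gn: "\<And>a. (G ^^ n) a = a"
    and GX: "\<And>a. G (X a) = \<iota> q * X (G a)"
    and Gmul: "\<And>a b. G (a * b) = G a * G b" and G1: "G 1 = 1"
    and Xder: "\<And>a b. X (a * b) = X a * b + G a * X b" and X1: "X 1 = 0"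
    using tma unfolding taft_module_algebra_def taft_module_def c_linear_def by blast+
  have G0: "G 0 = 0" using Gadd[of 0 0] by simp
  have Gdiff: "G (u - v) = G u - G v" for u v
    using Gadd[of "u - v" v] by (simp add: eq_diff_eq)
  have Gsurj: "G ((G ^^ (n - 1)) b) = b" for b
  proof -
    have "Suc (n - 1) = n" using npos by simp
    then show ?thesis using Gn[of b] by (metis comp_apply funpow.simps(2))
  qed
  have Gcen: "G z \<in> centre" if "z \<in> centre" for z
    unfolding centre_iff
  proof
    fix b
    obtain b' where b: "b = G b'" using Gsurj by metis
    have "G z * b = G (z * b')" by (simp add: b Gmul)
    also have "\<dots> = G (b' * z)" using centre_mult_comm[OF that, of b'] by simp
    also have "\<dots> = b * G z" by (simp add: b Gmul)
    finally show "G z * b = b * G z" .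
  qed
  have step1: "\<exists>c0. \<forall>a. X a = c0 * a - G a * c0"
  proof (cases "\<exists>z\<in>centre. G z \<noteq> z")
    case True
    then obtain z where z: "z \<in> centre" "G z \<noteq> z" by blast
    define u where "u = G z - z"
    have uc: "u \<in> centre" using z Gcen by (simp add: u_def centre_closed)
    have u0: "u \<noteq> 0" using z(2) by (simp add: u_def)
    obtain u' where u': "u' \<in> centre" "u * u' = 1" using cf uc u0 unfolding cfield_def by blast
    have u'u: "u' * u = 1" using u'(2) centre_mult_comm[OF uc, of u'] by simp
    have "X a = (- (u' * X z)) * a - G a * (- (u' * X z))" for a
    proof -
      have "X z * a + G z * X a = X a * z + G a * X z"
        using Xder[of z a] Xder[of a z] centre_mult_comm[OF z(1), of a] by simp
      then have "u * X a = G a * X z - X z * a"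
        using centre_mult_comm[OF z(1), of "X a"] by (simp add: u_def left_diff_distrib algebra_simps)
      then have "u' * (u * X a) = u' * (G a * X z - X z * a)" by simp
      then have "X a = u' * (G a * X z) - u' * X z * a"
        by (simp add: mult.assoc[symmetric] u'u right_diff_distrib)
      also have "u' * (G a * X z) = G a * (u' * X z)"
        using u'(1) by (metis centre_mult_comm mult.assoc)
      finally show ?thesis by simp
    qed
    then show ?thesis by blast
  next
    case False
    then have GZ: "\<And>z. z \<in> centre \<Longrightarrow> G z = z" by blast
    show ?thesis
    proof (cases "m = 1")
      case True
      have "X a = \<iota> \<alpha> * a - G a * \<iota> \<alpha>" for a
        using Xm[of a] True by (simp add: right_diff_distrib af(4)[of \<alpha> "G a"])
      then show ?thesis by blast
    next
      case False
      then have q1: "q \<noteq> 1" using qprim mpos by (metis One_nat_def less_one nat_neq_iff power_one_right)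
      have XZ0: "X z = 0" if zc: "z \<in> centre" for z
      proof -
        define w where "w = X z"
        have wa: "w * a = G a * w" for a
        proof -
          have "X z * a + G z * X a = X a * z + G a * X z"
            using Xder[of z a] Xder[of a z] centre_mult_comm[OF zc, of a] by simp
          then show ?thesis using centre_mult_comm[OF zc, of "X a"] GZ[OF zc] by (simp add: w_def)
        qed
        have Gw: "G w = \<iota> q * w" using GX[of z] GZ[OF zc] by (simp add: w_def)
        have ww: "w * w = 0"
        proof -
          have "w * w = \<iota> q * (w * w)" using wa[of w] Gw by (simp add: mult.assoc)
          then have "\<iota> (1 - q) * (w * w) = 0" by (simp add: af(7) af(1) left_diff_distrib)
          then have "\<iota> (1 / (1 - q)) * (\<iota> (1 - q) * (w * w)) = 0" by simp
          then show ?thesis using q1 by (simp add: af(11) af(1))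
        qed
        let ?I = "{y. \<exists>s. y = s * w}"
        have I: "two_sided_ideal ?I"
          unfolding two_sided_ideal_def
        proof (intro conjI ballI allI)
          show "0 \<in> ?I" by (rule CollectI, rule exI[of _ 0]) simp
        next
          fix y1 y2 assume "y1 \<in> ?I" "y2 \<in> ?I"
          then obtain s1 s2 where "y1 = s1 * w" "y2 = s2 * w" by blast
          then show "y1 + y2 \<in> ?I" by (intro CollectI exI[of _ "s1 + s2"]) (simp add: distrib_right)
        next
          fix y assume "y \<in> ?I"
          then obtain s1 where "y = s1 * w" by blast
          then show "- y \<in> ?I" by (intro CollectI exI[of _ "- s1"]) simp
        next
          fix y t assume "y \<in> ?I"
          then obtain s1 where "y = s1 * w" by blast
          then show "t * y \<in> ?I" by (intro CollectI exI[of _ "t * s1"]) (simp add: mult.assoc)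
        next
          fix y t assume "y \<in> ?I"
          then obtain s1 where "y = s1 * w" by blast
          then show "y * t \<in> ?I" by (intro CollectI exI[of _ "s1 * G t"]) (simp add: mult.assoc wa)
        qed
        have "w \<in> ?I" by (intro CollectI exI[of _ 1]) simp
        show ?thesis
        proof (cases "?I = {0}")
          case True then show ?thesis using \<open>w \<in> ?I\<close> w_def by blast
        next
          case False
          then have "?I = UNIV" using simple_ideal[OF s I] by blast
          then obtain s1 where s1: "1 = s1 * w" by blast
          have "w = w * (s1 * w)" using s1 by simp
          also have "\<dots> = (w * s1) * w" by (simp add: mult.assoc)
          also have "\<dots> = G s1 * w * w" by (simp only: wa[of s1])
          also have "\<dots> = G s1 * (w * w)" by (simp add: mult.assoc)
          finally show ?thesis using ww w_def by simp
        qed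
      qed
      have XZ: "X (z * a) = z * X a" if "z \<in> centre" for z a
        using Xder[of z a] XZ0[OF that] GZ[OF that] by simp
      show ?thesis
        by (rule inner_sigma[OF cs Gadd Gmul G1 GZ Xadd XZ Xder])
    qed
  qed
  then obtain c0 where c0: "\<And>a. X a = c0 * a - G a * c0" by blast
  \<comment> \<open>Step 2: averaging\<close>
  define W where "W = {w. \<forall>b. w * b = G b * w}"
  have W0: "0 \<in> W" by (simp add: W_def)
  have Wadd: "u \<in> W \<Longrightarrow> v \<in> W \<Longrightarrow> u + v \<in> W" for u v
    by (simp add: W_def distrib_left distrib_right)
  have Wsm: "u \<in> W \<Longrightarrow> \<iota> z * u \<in> W" for z u
  proof -
    assume u: "u \<in> W"
    have "\<iota> z * u * b = G b * (\<iota> z * u)" for b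
    proof -
      have "\<iota> z * u * b = \<iota> z * (G b * u)" using u by (simp add: W_def mult.assoc)
      also have "\<dots> = G b * (\<iota> z * u)" by (rule af(10)[symmetric])
      finally show ?thesis .
    qed
    then show ?thesis by (simp add: W_def)
  qed
  have WG: "u \<in> W \<Longrightarrow> G u \<in> W" for u
    unfolding W_def
  proof (rule CollectI, rule allI)
    fix b assume u: "u \<in> {w. \<forall>b. w * b = G b * w}"
    obtain b' where b: "b = G b'" using Gsurj by metis
    have "G u * b = G (u * b')" by (simp add: b Gmul)
    also have "\<dots> = G (G b' * u)" using u by simp
    also have "\<dots> = G b * G u" by (simp add: b Gmul)
    finally show "G u * b = G b * G u" .
  qed
  have Wsum: "(\<forall>j<N. f j \<in> W) \<Longrightarrow> (\<Sum>j<(N::nat). f j) \<in> W" for N f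
    by (induction N) (simp_all add: W0 Wadd)
  have GcW: "G c0 - \<iota> q * c0 \<in> W"
    unfolding W_def
  proof (rule CollectI, rule allI)
    fix b
    obtain a where b: "b = G a" using Gsurj by metis
    have "G (X a) = G c0 * G a - G (G a) * G c0" by (simp add: c0 Gdiff Gmul)
    moreover have "\<iota> q * X (G a) = \<iota> q * c0 * G a - G (G a) * (\<iota> q * c0)"
      by (simp add: c0 right_diff_distrib mult.assoc af(10)[of "G (G a)" q c0])
    ultimately have "G c0 * G a - G (G a) * G c0 = \<iota> q * c0 * G a - G (G a) * (\<iota> q * c0)"
      using GX[of a] by simp
    then show "(G c0 - \<iota> q * c0) * b = G b * (G c0 - \<iota> q * c0)"
      by (simp add: b left_diff_distrib right_diff_distrib algebra_simps)
  qed
  have Wpow: "(G ^^ j) c0 - \<iota> (q ^ j) * c0 \<in> W" for j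
  proof (induction j)
    case 0 then show ?case by (simp add: af(1) W0)
  next
    case (Suc j)
    have "(G ^^ Suc j) c0 - \<iota> (q ^ Suc j) * c0
        = G ((G ^^ j) c0 - \<iota> (q ^ j) * c0) + \<iota> (q ^ j) * (G c0 - \<iota> q * c0)"
      by (simp add: Gdiff Gsm right_diff_distrib af(11) mult.commute)
    then show ?case using Suc WG Wsm GcW Wadd by simp
  qed
  have iotan: "\<iota> (of_nat k) = of_nat k" for k
    by (induction k) (simp_all add: af(5) af(2) af(1))
  define c where "c = \<iota> (1 / of_nat n) * (\<Sum>j<n. \<iota> ((1 / q) ^ j) * (G ^^ j) c0)"
  have cc0: "c - c0 \<in> W"
  proof -
    have "c0 = \<iota> (1 / of_nat n) * (\<Sum>j<n. \<iota> ((1 / q) ^ j) * (\<iota> (q ^ j) * c0))"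
    proof -
      have "(\<Sum>j<n. \<iota> ((1 / q) ^ j) * (\<iota> (q ^ j) * c0)) = (\<Sum>j<n. \<iota> 1 * c0)"
        by (rule sum.cong[OF refl]) (simp add: af(11) q0 power_one_over)
      also have "\<dots> = \<iota> (of_nat n) * c0" by (simp add: iotan af(1))
      finally show ?thesis using npos by (simp add: af(11) af(1))
    qed
    then have "c - c0 = \<iota> (1 / of_nat n) * (\<Sum>j<n. \<iota> ((1 / q) ^ j) * ((G ^^ j) c0 - \<iota> (q ^ j) * c0))"
      by (simp add: c_def right_diff_distrib sum_subtractf)
    then show ?thesis using Wsum Wpow Wsm by simp
  qed
  have Xc: "X a = c * a - G a * c" for a
  proof -
    have "(c - c0) * a = G a * (c - c0)" using cc0 by (simp add: W_def)
    then show ?thesis by (simp add: c0 left_diff_distrib right_diff_distrib algebra_simps)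
  qed
  have Gsum: "G (\<Sum>i<(N::nat). f i) = (\<Sum>i<N. G (f i))" for N f
    by (induction N) (simp_all add: G0 Gadd)
  have Gc: "G c = \<iota> q * c"
  proof -
    define f where "f j = \<iota> (q * (1 / q) ^ j) * (G ^^ j) c0" for j
    have "G c = \<iota> (1 / of_nat n) * (\<Sum>j<n. \<iota> ((1 / q) ^ j) * (G ^^ Suc j) c0)"
      by (simp add: c_def Gsm Gsum)
    also have "(\<Sum>j<n. \<iota> ((1 / q) ^ j) * (G ^^ Suc j) c0) = (\<Sum>j<n. f (Suc j))"
      by (rule sum.cong[OF refl]) (simp add: f_def q0)
    also have "(\<Sum>j<n. f (Suc j)) = (\<Sum>j<n. f j)"
    proof -
      have fn: "f n = f 0" using qn Gn[of c0] by (simp add: f_def power_one_over af(1))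
      have "f 0 + (\<Sum>j<n. f (Suc j)) = (\<Sum>j<n. f j) + f n"
        using sum.lessThan_Suc_shift[of f n] sum.lessThan_Suc[of f n] by simp
      then show ?thesis using fn by (simp add: add.commute)
    qed
    also have "(\<Sum>j<n. f j) = \<iota> q * (\<Sum>j<n. \<iota> ((1 / q) ^ j) * (G ^^ j) c0)"
      by (simp add: f_def sum_distrib_left af(11))
    finally show ?thesis
      by (simp add: c_def af(11) mult.commute)
  qed
  have Gpow_eig: "(G ^^ k) a = \<iota> (lam ^ k) * a" if "G a = \<iota> lam * a" for a lam k
  proof (induction k)
    case 0 then show ?case by (simp add: af(1))
  next
    case (Suc k)
    then show ?case using that by (simp add: Gsm af(11) mult.commute)
  qed
  show ?thesis
  proof (intro exI conjI allI impI)
    show "G c = \<iota> (\<zeta> ^ (n div m)) * c" using Gc zq by simp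
  next
    fix i a assume "i < n" "G a = \<iota> (\<zeta> ^ i) * a"
    then show "X a = c * a - \<iota> (\<zeta> ^ i) * a * c" by (simp add: Xc)
  next
    fix i a assume i: "i < n" and ea: "G a = \<iota> (\<zeta> ^ i) * a"
    have "(X ^^ m) a = (\<Sum>j\<le>m. \<iota> ((- (\<zeta> ^ i)) ^ j * esym q m j) * (c ^ (m - j) * a * c ^ j))"
      by (rule Xpow[OF alg Gadd Gmul G1 Gsm Gc Xc ea])
    also have "\<dots> = c ^ m * a - \<iota> ((\<zeta> ^ i) ^ m) * a * c ^ m"
      by (rule collapse[OF alg mpos qm qprim])
    finally have h1: "(X ^^ m) a = c ^ m * a - \<iota> (\<zeta> ^ (m * i)) * a * c ^ m"
      by (simp add: power_mult[symmetric] mult.commute)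
    have "(X ^^ m) a = \<iota> \<alpha> * (a - \<iota> ((\<zeta> ^ i) ^ m) * a)" using Xm[of a] Gpow_eig[OF ea] by simp
    also have "\<dots> = \<iota> (\<alpha> * (1 - \<zeta> ^ (m * i))) * a"
      by (simp add: right_diff_distrib left_diff_distrib af(7) af(11) power_mult[symmetric]
          mult.commute)
    finally show "c ^ m * a - \<iota> (\<zeta> ^ (m * i)) * a * c ^ m = \<iota> (\<alpha> * (1 - \<zeta> ^ (m * i))) * a"
      using h1 by simp
  qed
qed



lemma zeta_pow_mod: "(\<zeta>::complex) ^ n = 1 \<Longrightarrow> \<zeta> ^ (k mod n) = \<zeta> ^ k"
proof -
  assume z: "\<zeta> ^ n = 1"
  have "\<zeta> ^ k = \<zeta> ^ (n * (k div n) + k mod n)" by (simp only: mult_div_mod_eq)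
  also have "\<dots> = (\<zeta> ^ n) ^ (k div n) * \<zeta> ^ (k mod n)" by (simp only: power_add power_mult)
  finally show ?thesis using z by simp
qed

lemma part2:
  fixes \<iota> :: "complex \<Rightarrow> 'a::ring_1"
    and n m :: nat and q \<zeta> \<alpha> :: complex
  assumes alg: "complex_algebra \<iota>"
    and mpos: "0 < m" and npos: "0 < n" and mdvd: "m dvd n"
    and q: "primitive_root_of_unity m q"
    and zeta: "primitive_root_of_unity n \<zeta>" and zq: "\<zeta> ^ (n div m) = q"
    and gr: "zn_graded \<iota> n Agr" and cA: "c \<in> Agr ((n div m) mod n)"
    and rel: "\<forall>i<n. \<forall>a\<in>Agr i.
              c ^ m * a - \<iota> (\<zeta> ^ (m * i)) * a * c ^ m = \<iota> (\<alpha> * (1 - \<zeta> ^ (m * i))) * a"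
  shows "\<exists>G X. taft_module \<iota> n m \<alpha> q G X
             \<and> (\<forall>i<n. \<forall>a\<in>Agr i. G a = \<iota> (\<zeta> ^ i) * a \<and> X a = c * a - \<iota> (\<zeta> ^ i) * a * c)
             \<and> (\<forall>G' X'. taft_module \<iota> n m \<alpha> q G' X'
                  \<and> (\<forall>i<n. \<forall>a\<in>Agr i. G' a = \<iota> (\<zeta> ^ i) * a \<and> X' a = c * a - \<iota> (\<zeta> ^ i) * a * c)
                  \<longrightarrow> G' = G \<and> X' = X)
             \<and> taft_module_algebra \<iota> n m \<alpha> q G X"
proof -
  note af = alg_facts[OF alg]
  have zn: "\<zeta> ^ n = 1" using zeta by (simp add: primitive_root_of_unity_def)
  have qm: "q ^ m = 1" and qprim: "\<forall>j. 0 < j \<and> j < m \<longrightarrow> q ^ j \<noteq> 1"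
    using q by (simp_all add: primitive_root_of_unity_def)
  have A0: "\<And>i. i < n \<Longrightarrow> 0 \<in> Agr i"
    and Aadd: "\<And>i a b. i < n \<Longrightarrow> a \<in> Agr i \<Longrightarrow> b \<in> Agr i \<Longrightarrow> a + b \<in> Agr i"
    and Asm: "\<And>i z a. i < n \<Longrightarrow> a \<in> Agr i \<Longrightarrow> \<iota> z * a \<in> Agr i"
    and Amul: "\<And>i j a b. i < n \<Longrightarrow> j < n \<Longrightarrow> a \<in> Agr i \<Longrightarrow> b \<in> Agr j \<Longrightarrow> a * b \<in> Agr ((i + j) mod n)"
    and Adec: "\<And>a. \<exists>!f. (\<forall>i. (i < n \<longrightarrow> f i \<in> Agr i) \<and> (n \<le> i \<longrightarrow> f i = 0)) \<and> a = (\<Sum>i<n. f i)"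
  proof -
    have Z: "(\<forall>i<n. 0 \<in> Agr i \<and> (\<forall>a\<in>Agr i. \<forall>b\<in>Agr i. a + b \<in> Agr i) \<and> (\<forall>z. \<forall>a\<in>Agr i. \<iota> z * a \<in> Agr i))
     \<and> (\<forall>i<n. \<forall>j<n. \<forall>a\<in>Agr i. \<forall>b\<in>Agr j. a * b \<in> Agr ((i + j) mod n))
     \<and> (\<forall>a. \<exists>!f. (\<forall>i. (i < n \<longrightarrow> f i \<in> Agr i) \<and> (n \<le> i \<longrightarrow> f i = 0)) \<and> a = (\<Sum>i<n. f i))"
      using gr unfolding zn_graded_def .
    have Z1: "\<forall>i<n. 0 \<in> Agr i \<and> (\<forall>a\<in>Agr i. \<forall>b\<in>Agr i. a + b \<in> Agr i) \<and> (\<forall>z. \<forall>a\<in>Agr i. \<iota> z * a \<in> Agr i)"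
      using Z by (rule conjunct1)
    have Z2: "\<forall>i<n. \<forall>j<n. \<forall>a\<in>Agr i. \<forall>b\<in>Agr j. a * b \<in> Agr ((i + j) mod n)"
      using Z by (rule conjunct1[OF conjunct2])
    have Z3: "\<forall>a. \<exists>!f. (\<forall>i. (i < n \<longrightarrow> f i \<in> Agr i) \<and> (n \<le> i \<longrightarrow> f i = 0)) \<and> a = (\<Sum>i<n. f i)"
      using Z by (rule conjunct2[OF conjunct2])
    show "\<And>i. i < n \<Longrightarrow> 0 \<in> Agr i" using Z1 by blast
    show "\<And>i a b. i < n \<Longrightarrow> a \<in> Agr i \<Longrightarrow> b \<in> Agr i \<Longrightarrow> a + b \<in> Agr i" using Z1 by blast
    show "\<And>i z a. i < n \<Longrightarrow> a \<in> Agr i \<Longrightarrow> \<iota> z * a \<in> Agr i" using Z1 by blast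
    show "\<And>i j a b. i < n \<Longrightarrow> j < n \<Longrightarrow> a \<in> Agr i \<Longrightarrow> b \<in> Agr j \<Longrightarrow> a * b \<in> Agr ((i + j) mod n)"
      using Z2 by blast
    show "\<And>a. \<exists>!f. (\<forall>i. (i < n \<longrightarrow> f i \<in> Agr i) \<and> (n \<le> i \<longrightarrow> f i = 0)) \<and> a = (\<Sum>i<n. f i)"
      using Z3 by (rule spec)
  qed
  define P where "P a f \<longleftrightarrow> (\<forall>i. (i < n \<longrightarrow> f i \<in> Agr i) \<and> (n \<le> i \<longrightarrow> f i = 0)) \<and> a = (\<Sum>i<n. f i)" for a f
  define comp where "comp a = (THE f. P a f)" for a
  have ex1P: "\<exists>!f. P a f" for a unfolding P_def by (rule Adec)
  have compP: "P a (comp a)" for a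
    unfolding comp_def by (rule theI'[OF ex1P])
  have comp_unique: "P a f \<Longrightarrow> comp a = f" for a f
    unfolding comp_def by (rule the1_equality[OF ex1P])
  have compA: "i < n \<Longrightarrow> comp a i \<in> Agr i" for a i using compP[of a] by (simp add: P_def)
  have comp_sum: "(\<Sum>i<n. comp a i) = a" for a using compP[of a] by (simp add: P_def)
  have comp_add: "comp (a + b) = (\<lambda>i. comp a i + comp b i)" for a b
  proof (rule comp_unique)
    show "P (a + b) (\<lambda>i. comp a i + comp b i)"
      using compP[of a] compP[of b] by (auto simp: P_def sum.distrib intro: Aadd)
  qed
  have comp_sm: "comp (\<iota> z * a) = (\<lambda>i. \<iota> z * comp a i)" for z a
  proof (rule comp_unique)
    have "(\<Sum>i<n. \<iota> z * comp a i) = \<iota> z * a" by (simp add: sum_distrib_left[symmetric] comp_sum)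
    then show "P (\<iota> z * a) (\<lambda>i. \<iota> z * comp a i)"
      using compP[of a] by (auto simp: P_def intro: Asm)
  qed
  have comp_hom: "comp a = (\<lambda>i. if i = j then a else 0)" if "j < n" "a \<in> Agr j" for a j
  proof (rule comp_unique)
    show "P a (\<lambda>i. if i = j then a else 0)"
      using that by (auto simp: P_def A0 sum.delta)
  qed
  define G where "G a = (\<Sum>i<n. \<iota> (\<zeta> ^ i) * comp a i)" for a
  define X where "X a = c * a - G a * c" for a
  have G_hom: "G a = \<iota> (\<zeta> ^ j) * a" if "j < n" "a \<in> Agr j" for a j
    using that by (simp add: G_def comp_hom[OF that] if_distrib sum.delta cong: if_cong)
  have Gadd: "G (a + b) = G a + G b" for a b
    by (simp add: G_def comp_add distrib_left sum.distrib)
  have Gsm: "G (\<iota> z * a) = \<iota> z * G a" for z a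
  proof -
    have "G (\<iota> z * a) = (\<Sum>i<n. \<iota> (\<zeta> ^ i) * (\<iota> z * comp a i))" by (simp add: G_def comp_sm)
    also have "\<dots> = (\<Sum>i<n. \<iota> z * (\<iota> (\<zeta> ^ i) * comp a i))"
      by (rule sum.cong[OF refl]) (simp add: af(11) mult.commute)
    also have "\<dots> = \<iota> z * G a" by (simp add: G_def sum_distrib_left)
    finally show ?thesis .
  qed
  have G0: "G 0 = 0" using Gadd[of 0 0] by simp
  have Gdiff: "G (u - v) = G u - G v" for u v
    using Gadd[of "u - v" v] by (simp add: eq_diff_eq)
  have Gsum: "G (\<Sum>i<(N::nat). f i) = (\<Sum>i<N. G (f i))" for N f
    by (induction N) (simp_all add: G0 Gadd)
  have Gmul: "G (a * b) = G a * G b" for a b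
  proof -
    have "a * b = (\<Sum>i<n. comp a i) * (\<Sum>j<n. comp b j)" by (simp add: comp_sum)
    also have "\<dots> = (\<Sum>i<n. \<Sum>j<n. comp a i * comp b j)"
      by (subst sum_distrib_right) (simp add: sum_distrib_left)
    finally have "a * b = (\<Sum>i<n. \<Sum>j<n. comp a i * comp b j)" .
    then have "G (a * b) = (\<Sum>i<n. \<Sum>j<n. G (comp a i * comp b j))" by (simp add: Gsum)
    also have "\<dots> = (\<Sum>i<n. \<Sum>j<n. (\<iota> (\<zeta> ^ i) * comp a i) * (\<iota> (\<zeta> ^ j) * comp b j))"
    proof (intro sum.cong refl)
      fix i j assume i: "i \<in> {..<n}" and j: "j \<in> {..<n}"
      then have "G (comp a i * comp b j) = \<iota> (\<zeta> ^ ((i + j) mod n)) * (comp a i * comp b j)"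
        by (intro G_hom Amul compA) auto
      also have "\<dots> = \<iota> (\<zeta> ^ i * \<zeta> ^ j) * (comp a i * comp b j)"
        by (simp add: zeta_pow_mod[OF zn] power_add)
      also have "\<dots> = (\<iota> (\<zeta> ^ i) * comp a i) * (\<iota> (\<zeta> ^ j) * comp b j)"
        by (simp only: af(12))
      finally show "G (comp a i * comp b j) = (\<iota> (\<zeta> ^ i) * comp a i) * (\<iota> (\<zeta> ^ j) * comp b j)" .
    qed
    also have "\<dots> = G a * G b"
      unfolding G_def by (subst sum_distrib_right) (simp add: sum_distrib_left)
    finally show ?thesis .
  qed
  have Gpow: "(G ^^ k) a = (\<Sum>i<n. \<iota> (\<zeta> ^ (i * k)) * comp a i)" for k a
  proof (induction k)
    case 0 then show ?case by (simp add: af(1) comp_sum)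
  next
    case (Suc k)
    have "(G ^^ Suc k) a = (\<Sum>i<n. G (\<iota> (\<zeta> ^ (i * k)) * comp a i))" by (simp add: Suc Gsum)
    also have "\<dots> = (\<Sum>i<n. \<iota> (\<zeta> ^ (i * Suc k)) * comp a i)"
    proof (rule sum.cong[OF refl])
      fix i assume "i \<in> {..<n}"
      then have "G (comp a i) = \<iota> (\<zeta> ^ i) * comp a i" by (intro G_hom compA) auto
      then show "G (\<iota> (\<zeta> ^ (i * k)) * comp a i) = \<iota> (\<zeta> ^ (i * Suc k)) * comp a i"
        by (simp add: Gsm af(11) power_add mult.commute)
    qed
    finally show ?case .
  qed
  have Gn: "(G ^^ n) a = a" for a
  proof -
    have "(G ^^ n) a = (\<Sum>i<n. \<iota> ((\<zeta> ^ n) ^ i) * comp a i)"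
      by (simp add: Gpow power_mult[symmetric] mult.commute)
    then show ?thesis by (simp add: zn af(1) comp_sum)
  qed
  have G1: "G 1 = 1"
  proof -
    have n1: "Suc (n - 1) = n" using npos by simp
    define b where "b = (G ^^ (n - 1)) 1"
    have Gb: "G b = 1" using Gn[of 1] n1 by (metis b_def comp_apply funpow.simps(2))
    have "G 1 * G b = G b" using Gmul[of 1 b] by simp
    then show ?thesis using Gb by simp
  qed
  have Gc: "G c = \<iota> q * c"
    using G_hom[OF _ cA] npos by (simp add: zeta_pow_mod[OF zn] zq)
  have Xadd: "X (a + b) = X a + X b" for a b
    by (simp add: X_def Gadd distrib_left distrib_right)
  have Xsm: "X (\<iota> z * a) = \<iota> z * X a" for z a
  proof -
    have "c * (\<iota> z * a) = \<iota> z * (c * a)" by (rule af(10))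
    then show ?thesis by (simp add: X_def Gsm right_diff_distrib mult.assoc)
  qed
  have X0: "X 0 = 0" by (simp add: X_def G0)
  have Xsum: "X (\<Sum>i<(N::nat). f i) = (\<Sum>i<N. X (f i))" for N f
    by (induction N) (simp_all add: X0 Xadd)
  have Xksum: "(X ^^ k) (\<Sum>i<n. f i) = (\<Sum>i<n. (X ^^ k) (f i))" for k f
    by (induction k) (simp_all add: Xsum)
  have Xm_hom: "(X ^^ m) a = \<iota> (\<alpha> * (1 - \<zeta> ^ (m * i))) * a" if "i < n" "a \<in> Agr i" for a i
  proof -
    have "(X ^^ m) a = (\<Sum>j\<le>m. \<iota> ((- (\<zeta> ^ i)) ^ j * esym q m j) * (c ^ (m - j) * a * c ^ j))"
      by (rule Xpow[OF alg Gadd Gmul G1 Gsm Gc]) (simp_all add: X_def G_hom[OF that])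
    also have "\<dots> = c ^ m * a - \<iota> ((\<zeta> ^ i) ^ m) * a * c ^ m"
      by (rule collapse[OF alg mpos qm qprim])
    also have "\<dots> = \<iota> (\<alpha> * (1 - \<zeta> ^ (m * i))) * a"
      using rel that by (simp add: power_mult[symmetric] mult.commute)
    finally show ?thesis .
  qed
  have tm: "taft_module \<iota> n m \<alpha> q G X"
    unfolding taft_module_def c_linear_def
  proof (intro conjI allI)
    fix a b show "G (a + b) = G a + G b" by (rule Gadd)
  next
    fix z a show "G (\<iota> z * a) = \<iota> z * G a" by (rule Gsm)
  next
    fix a b show "X (a + b) = X a + X b" by (rule Xadd)
  next
    fix z a show "X (\<iota> z * a) = \<iota> z * X a" by (rule Xsm)
  next
    fix a
    have "(X ^^ m) a = (\<Sum>i<n. (X ^^ m) (comp a i))" using Xksum[where k=m and f="comp a"] by (simp add: comp_sum)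
    also have "\<dots> = (\<Sum>i<n. \<iota> (\<alpha> * (1 - \<zeta> ^ (m * i))) * comp a i)"
      by (rule sum.cong[OF refl]) (simp add: Xm_hom compA)
    also have "\<dots> = \<iota> \<alpha> * (a - (G ^^ m) a)"
    proof -
      have "\<iota> \<alpha> * (a - (G ^^ m) a) = \<iota> \<alpha> * ((\<Sum>i<n. comp a i) - (\<Sum>i<n. \<iota> (\<zeta> ^ (i * m)) * comp a i))"
        by (simp add: Gpow comp_sum)
      also have "\<dots> = (\<Sum>i<n. \<iota> \<alpha> * (comp a i - \<iota> (\<zeta> ^ (i * m)) * comp a i))"
        by (simp add: sum_subtractf sum_distrib_left right_diff_distrib)
      also have "\<dots> = (\<Sum>i<n. \<iota> (\<alpha> * (1 - \<zeta> ^ (m * i))) * comp a i)"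
        by (rule sum.cong[OF refl])
          (simp add: right_diff_distrib left_diff_distrib af(1) af(3) af(7) mult.assoc mult.commute)
      finally show ?thesis by simp
    qed
    finally show "(X ^^ m) a = \<iota> \<alpha> * (a - (G ^^ m) a)" .
  next
    fix a show "(G ^^ n) a = a" by (rule Gn)
  next
    fix a
    have "G (X a) = \<iota> q * c * G a - G (G a) * (\<iota> q * c)" by (simp add: X_def Gmul Gc Gdiff)
    also have "\<dots> = \<iota> q * X (G a)"
      by (simp add: X_def right_diff_distrib mult.assoc af(10)[of "G (G a)" q c])
    finally show "G (X a) = \<iota> q * X (G a)" .
  qed
  have hom: "\<forall>i<n. \<forall>a\<in>Agr i. G a = \<iota> (\<zeta> ^ i) * a \<and> X a = c * a - \<iota> (\<zeta> ^ i) * a * c"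
    by (simp add: X_def G_hom)
  have uniq: "G' = G \<and> X' = X"
    if tm': "taft_module \<iota> n m \<alpha> q G' X'"
      and h': "\<forall>i<n. \<forall>a\<in>Agr i. G' a = \<iota> (\<zeta> ^ i) * a \<and> X' a = c * a - \<iota> (\<zeta> ^ i) * a * c" for G' X'
  proof -
    have G'add: "G' (a + b) = G' a + G' b" and X'add: "X' (a + b) = X' a + X' b" for a b
      using tm' unfolding taft_module_def c_linear_def by blast+
    have G'0: "G' 0 = 0" using G'add[of 0 0] by simp
    have X'0: "X' 0 = 0" using X'add[of 0 0] by simp
    have G'sum: "G' (\<Sum>i<(N::nat). f i) = (\<Sum>i<N. G' (f i))" for N f
      by (induction N) (simp_all add: G'0 G'add)
    have X'sum: "X' (\<Sum>i<(N::nat). f i) = (\<Sum>i<N. X' (f i))" for N f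
      by (induction N) (simp_all add: X'0 X'add)
    have "G' a = G a" for a
    proof -
      have "G' a = (\<Sum>i<n. G' (comp a i))" using G'sum[where N=n and f="comp a"] by (simp add: comp_sum)
      also have "\<dots> = (\<Sum>i<n. G (comp a i))"
        by (rule sum.cong[OF refl]) (use h' compA hom in auto)
      also have "\<dots> = G a" using Gsum[where N=n and f="comp a"] by (simp add: comp_sum)
      finally show ?thesis .
    qed
    moreover have "X' a = X a" for a
    proof -
      have "X' a = (\<Sum>i<n. X' (comp a i))" using X'sum[where N=n and f="comp a"] by (simp add: comp_sum)
      also have "\<dots> = (\<Sum>i<n. X (comp a i))"
        by (rule sum.cong[OF refl]) (use h' compA hom in auto)
      also have "\<dots> = X a" using Xsum[where N=n and f="comp a"] by (simp add: comp_sum)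
      finally show ?thesis .
    qed
    ultimately show ?thesis by auto
  qed
  have tma: "taft_module_algebra \<iota> n m \<alpha> q G X"
    unfolding taft_module_algebra_def
  proof (intro conjI allI tm)
    fix a b show "G (a * b) = G a * G b" by (rule Gmul)
  next
    show "G 1 = 1" by (rule G1)
  next
    fix a b show "X (a * b) = X a * b + G a * X b"
      by (simp add: X_def Gmul left_diff_distrib right_diff_distrib mult.assoc)
  next
    show "X 1 = 0" by (simp add: X_def G1)
  qed
  show ?thesis using tm hom uniq tma by blast
qed


theorem theorem3p1:
  fixes \<iota> :: "complex \<Rightarrow> 'a::ring_1"
    and n m :: nat and q \<zeta> \<alpha> :: complex
  assumes alg: "complex_algebra \<iota>"
    and mpos: "0 < m" and npos: "0 < n" and mdvd: "m dvd n"
    and q: "primitive_root_of_unity m q"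
    and zeta: "primitive_root_of_unity n \<zeta>" and zq: "\<zeta> ^ (n div m) = q"
  shows
   "(central_simple TYPE('a) \<longrightarrow>
      (\<forall>G X. taft_module_algebra \<iota> n m \<alpha> q G X \<longrightarrow>
        (\<exists>c. G c = \<iota> (\<zeta> ^ (n div m)) * c
           \<and> (\<forall>i<n. \<forall>a. G a = \<iota> (\<zeta> ^ i) * a \<longrightarrow> X a = c * a - \<iota> (\<zeta> ^ i) * a * c)
           \<and> (\<forall>i<n. \<forall>a. G a = \<iota> (\<zeta> ^ i) * a \<longrightarrow>
                c ^ m * a - \<iota> (\<zeta> ^ (m * i)) * a * c ^ m = \<iota> (\<alpha> * (1 - \<zeta> ^ (m * i))) * a))))
    \<and>
    (\<forall>Agr c. zn_graded \<iota> n Agr \<and> central_simple TYPE('a) \<and> division_ring_pred TYPE('a)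
        \<and> c \<in> Agr ((n div m) mod n)
        \<and> (\<forall>i<n. \<forall>a\<in>Agr i.
              c ^ m * a - \<iota> (\<zeta> ^ (m * i)) * a * c ^ m = \<iota> (\<alpha> * (1 - \<zeta> ^ (m * i))) * a)
      \<longrightarrow> (\<exists>G X. taft_module \<iota> n m \<alpha> q G X
             \<and> (\<forall>i<n. \<forall>a\<in>Agr i. G a = \<iota> (\<zeta> ^ i) * a \<and> X a = c * a - \<iota> (\<zeta> ^ i) * a * c)
             \<and> (\<forall>G' X'. taft_module \<iota> n m \<alpha> q G' X'
                  \<and> (\<forall>i<n. \<forall>a\<in>Agr i. G' a = \<iota> (\<zeta> ^ i) * a \<and> X' a = c * a - \<iota> (\<zeta> ^ i) * a * c)
                  \<longrightarrow> G' = G \<and> X' = X)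
             \<and> taft_module_algebra \<iota> n m \<alpha> q G X))"
  proof (intro conjI)
  show "central_simple TYPE('a) \<longrightarrow>
      (\<forall>G X. taft_module_algebra \<iota> n m \<alpha> q G X \<longrightarrow>
        (\<exists>c. G c = \<iota> (\<zeta> ^ (n div m)) * c
           \<and> (\<forall>i<n. \<forall>a. G a = \<iota> (\<zeta> ^ i) * a \<longrightarrow> X a = c * a - \<iota> (\<zeta> ^ i) * a * c)
           \<and> (\<forall>i<n. \<forall>a. G a = \<iota> (\<zeta> ^ i) * a \<longrightarrow>
                c ^ m * a - \<iota> (\<zeta> ^ (m * i)) * a * c ^ m = \<iota> (\<alpha> * (1 - \<zeta> ^ (m * i))) * a)))"
    using part1[OF alg mpos npos mdvd q zeta zq] by blast
next
  show "\<forall>Agr c. zn_graded \<iota> n Agr \<and> central_simple TYPE('a) \<and> division_ring_pred TYPE('a)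
        \<and> c \<in> Agr ((n div m) mod n)
        \<and> (\<forall>i<n. \<forall>a\<in>Agr i.
              c ^ m * a - \<iota> (\<zeta> ^ (m * i)) * a * c ^ m = \<iota> (\<alpha> * (1 - \<zeta> ^ (m * i))) * a)
      \<longrightarrow> (\<exists>G X. taft_module \<iota> n m \<alpha> q G X
             \<and> (\<forall>i<n. \<forall>a\<in>Agr i. G a = \<iota> (\<zeta> ^ i) * a \<and> X a = c * a - \<iota> (\<zeta> ^ i) * a * c)
             \<and> (\<forall>G' X'. taft_module \<iota> n m \<alpha> q G' X'
                  \<and> (\<forall>i<n. \<forall>a\<in>Agr i. G' a = \<iota> (\<zeta> ^ i) * a \<and> X' a = c * a - \<iota> (\<zeta> ^ i) * a * c)
                  \<longrightarrow> G' = G \<and> X' = X)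
             \<and> taft_module_algebra \<iota> n m \<alpha> q G X)"
  proof (intro allI impI)
    fix Agr c
    assume h: "zn_graded \<iota> n Agr \<and> central_simple TYPE('a) \<and> division_ring_pred TYPE('a)
        \<and> c \<in> Agr ((n div m) mod n)
        \<and> (\<forall>i<n. \<forall>a\<in>Agr i.
              c ^ m * a - \<iota> (\<zeta> ^ (m * i)) * a * c ^ m = \<iota> (\<alpha> * (1 - \<zeta> ^ (m * i))) * a)"
    then have gr: "zn_graded \<iota> n Agr" and cA: "c \<in> Agr ((n div m) mod n)"
      and rel: "\<forall>i<n. \<forall>a\<in>Agr i.
              c ^ m * a - \<iota> (\<zeta> ^ (m * i)) * a * c ^ m = \<iota> (\<alpha> * (1 - \<zeta> ^ (m * i))) * a"
      by blast+
    show "\<exists>G X. taft_module \<iota> n m \<alpha> q G X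
             \<and> (\<forall>i<n. \<forall>a\<in>Agr i. G a = \<iota> (\<zeta> ^ i) * a \<and> X a = c * a - \<iota> (\<zeta> ^ i) * a * c)
             \<and> (\<forall>G' X'. taft_module \<iota> n m \<alpha> q G' X'
                  \<and> (\<forall>i<n. \<forall>a\<in>Agr i. G' a = \<iota> (\<zeta> ^ i) * a \<and> X' a = c * a - \<iota> (\<zeta> ^ i) * a * c)
                  \<longrightarrow> G' = G \<and> X' = X)
             \<and> taft_module_algebra \<iota> n m \<alpha> q G X"
      by (rule part2[OF alg mpos npos mdvd q zeta zq gr cA rel])
  qed
qed

end
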